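(* Let $v$ be periodic with $0\le\hat v\in\ell^1(\Lambda^* )$, $\hat v(0)>0$, and let $c_0\in(0,1]$. There exist constants $C,\eta_0>0$ (depending only on $c_0$ and $v$) such that for all $\eta\ge\eta_0$, all $\beta,\mu$ with $c_0\eta^{-2/3}\le\beta\le c_0^{-1}\eta^{-2/3}$ and $-c_0^{-1}\eta^{2/3}\le\mu\le c_0^{-1}$, and every state $\Gamma$ on $\mathscr F$, $$\mathcal G(\Gamma)\ge\Phi^{\mathrm{id}}_+(\beta,\widetilde\mu)-\frac{(\mu-\widetilde\mu)^2\eta}{2\hat v(0)}+\frac{\hat v(0)}{2\eta}\mathrm{Tr}\Big[\Big(\mathcal N-\frac{(\mu-\widetilde\mu+\frac{v(0)}{2\eta})\eta}{\hat v(0)}\Big)^2\Gamma\Big]-C\eta^{2/3}\ln\eta.$$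
   Context: Setting: $\Lambda=[0,1]^3$ torus, $\Lambda^*=2\pi\mathbb{Z}^3$, $\Lambda^*_+=\Lambda^*\setminus\{0\}$, $\hat v(p)=\int_\Lambda v(x)e^{-ip\cdot x}dx$, $v(0)=\sum_p\hat v(p)$. $\mathscr F$ is the bosonic Fock space over $L^2(\Lambda)$, $a_p,a_p^*$ annihilation/creation operators of $\varphi_p(x)=e^{ip\cdot x}$, $\mathcal N=\sum_pa_p^*a_p$. $\mathcal H_\eta=\sum_{p}p^2a_p^*a_p+\frac{1}{2\eta}\sum_{p,u,w\in\Lambda^*}\hat v(p)a^*_{u+p}a^*_{w-p}a_ua_w$. A state is a nonnegative trace-one operator on $\mathscr F$; the grand potential functional is $\mathcal G(\Gamma)=\mathrm{Tr}[(\mathcal H_\eta-\mu\mathcal N)\Gamma]+\beta^{-1}\mathrm{Tr}[\Gamma\ln\Gamma]$. $\Phi^{\mathrm{id}}_+(\beta,\nu)=\beta^{-1}\sum_{p\in\Lambda^*_+}\ln(1-e^{-\beta(p^2-\nu)})$. The effective chemical potential $\widetilde\mu\in(-\infty,0)$ is the unique solution of $\sum_{p\in\Lambda^*}\frac{1}{e^{\beta(p^2-\widetilde\mu)}-1}=\frac{(\mu-\widetilde\mu)\eta}{\hat v(0)}$. *)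

theory Defs
  imports "HOL-Analysis.Analysis"
begin

text \<open>Momenta: \<Lambda>* = 2\<pi> Z^3, a momentum p = 2\<pi> k is represented by k :: int \<times> int \<times> int.
  Fock space over L^2([0,1]^3) is represented in the occupation-number (plane wave) basis:
  a configuration is m :: mom \<Rightarrow> nat with finite support, and a Fock vector is a
  square-summable function from configurations to complex numbers vanishing off
  finitely-supported configurations.\<close>

type_synonym mom = "int \<times> int \<times> int"
type_synonym config = "mom \<Rightarrow> nat"
type_synonym fvec = "config \<Rightarrow> complex"

definition psq :: "mom \<Rightarrow> real" where
  "psq k = (2 * pi)^2 * (real_of_int (fst k)^2 + real_of_int (fst (snd k))^2 + real_of_int (snd (snd k))^2)"

definition supp_cfg :: "config \<Rightarrow> mom set" where
  "supp_cfg m = {k. m k \<noteq> 0}"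

definition numop :: "config \<Rightarrow> real" where
  "numop m = real (\<Sum>k\<in>supp_cfg m. m k)"

definition kin :: "config \<Rightarrow> real" where
  "kin m = (\<Sum>k\<in>supp_cfg m. psq k * real (m k))"

definition fock_vec :: "fvec \<Rightarrow> bool" where
  "fock_vec \<psi> \<longleftrightarrow> (\<forall>m. \<not> finite (supp_cfg m) \<longrightarrow> \<psi> m = 0)
      \<and> (\<lambda>m. (cmod (\<psi> m))^2) summable_on UNIV"

definition fock_inner :: "fvec \<Rightarrow> fvec \<Rightarrow> complex" where
  "fock_inner \<phi> \<psi> = (\<Sum>\<^sub>\<infinity>m. cnj (\<phi> m) * \<psi> m)"

definition ann :: "mom \<Rightarrow> fvec \<Rightarrow> fvec" where
  "ann k \<psi> m = complex_of_real (sqrt (real (m k + 1))) * \<psi> (m(k := m k + 1))"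

definition cre :: "mom \<Rightarrow> fvec \<Rightarrow> fvec" where
  "cre k \<psi> m = (if m k = 0 then 0
       else complex_of_real (sqrt (real (m k))) * \<psi> (m(k := m k - 1)))"

definition dens_op :: "mom \<Rightarrow> fvec \<Rightarrow> fvec" where
  "dens_op p \<psi> m = (\<Sum>w\<in>{w. m (w - p) \<noteq> 0}. cre (w - p) (ann w \<psi>) m)"

text \<open>A state, given by its spectral decomposition \<Gamma> = \<Sum>_j lam_j |\<psi>_j\<rangle>\<langle>\<psi>_j|.\<close>
definition is_state :: "(nat \<Rightarrow> real) \<Rightarrow> (nat \<Rightarrow> fvec) \<Rightarrow> bool" where
  "is_state lam \<psi> \<longleftrightarrow> (\<forall>j. lam j \<ge> 0) \<and> (lam has_sum 1) UNIV
     \<and> (\<forall>j. fock_vec (\<psi> j))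
     \<and> (\<forall>i j. fock_inner (\<psi> i) (\<psi> j) = (if i = j then 1 else 0))"

definition v_zero :: "(mom \<Rightarrow> real) \<Rightarrow> real" where
  "v_zero vh = (\<Sum>\<^sub>\<infinity>p. vh p)"

text \<open>Using \<Sum>_{p,u,w} vh(p) a^*_{u+p} a^*_{w-p} a_u a_w = \<Sum>_p vh(p) (\<rho>_p \<rho>_p^* - N) with
  \<rho>_p^* = dens_op p, the quadratic form of H_\<eta> - \<mu> N at \<psi> is
  \<Sum>_m |\<psi> m|^2 diag(m) + (1/(2\<eta>)) \<Sum>_p vh(p) \<parallel>dens_op p \<psi>\<parallel>^2.\<close>
definition diag_coef :: "(mom \<Rightarrow> real) \<Rightarrow> real \<Rightarrow> real \<Rightarrow> config \<Rightarrow> real" where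
  "diag_coef vh \<eta> \<mu> m = kin m - (\<mu> + v_zero vh / (2 * \<eta>)) * numop m"

definition energy_pos :: "(mom \<Rightarrow> real) \<Rightarrow> real \<Rightarrow> real \<Rightarrow> (nat \<Rightarrow> real) \<Rightarrow> (nat \<Rightarrow> fvec) \<Rightarrow> ennreal" where
  "energy_pos vh \<eta> \<mu> lam \<psi> =
     (\<Sum>\<^sub>\<infinity>j. ennreal (lam j) *
        ((\<Sum>\<^sub>\<infinity>m. ennreal ((cmod (\<psi> j m))^2 * max (diag_coef vh \<eta> \<mu> m) 0))
         + ennreal (1 / (2 * \<eta>)) *
           (\<Sum>\<^sub>\<infinity>p. ennreal (vh p) * (\<Sum>\<^sub>\<infinity>m. ennreal ((cmod (dens_op p (\<psi> j) m))^2)))))"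

definition energy_neg :: "(mom \<Rightarrow> real) \<Rightarrow> real \<Rightarrow> real \<Rightarrow> (nat \<Rightarrow> real) \<Rightarrow> (nat \<Rightarrow> fvec) \<Rightarrow> ennreal" where
  "energy_neg vh \<eta> \<mu> lam \<psi> =
     (\<Sum>\<^sub>\<infinity>j. ennreal (lam j) *
        (\<Sum>\<^sub>\<infinity>m. ennreal ((cmod (\<psi> j m))^2 * max (- diag_coef vh \<eta> \<mu> m) 0)))"

text \<open>Tr[(H_\<eta> - \<mu> N) \<Gamma>] in (-\<infinity>, \<infinity>]; it is +\<infinity> whenever the positive part diverges
  (the operator is bounded below).\<close>
definition energy :: "(mom \<Rightarrow> real) \<Rightarrow> real \<Rightarrow> real \<Rightarrow> (nat \<Rightarrow> real) \<Rightarrow> (nat \<Rightarrow> fvec) \<Rightarrow> ereal" where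
  "energy vh \<eta> \<mu> lam \<psi> =
     (if energy_pos vh \<eta> \<mu> lam \<psi> = top then \<infinity>
      else enn2ereal (energy_pos vh \<eta> \<mu> lam \<psi>) - enn2ereal (energy_neg vh \<eta> \<mu> lam \<psi>))"

text \<open>Tr[\<Gamma> ln \<Gamma>] = \<Sum>_j lam_j ln lam_j \<in> [-\<infinity>, 0]\<close>
definition ent_term :: "(nat \<Rightarrow> real) \<Rightarrow> ereal" where
  "ent_term lam = - enn2ereal (\<Sum>\<^sub>\<infinity>j. ennreal (- (lam j * ln (lam j))))"

definition grand_pot :: "(mom \<Rightarrow> real) \<Rightarrow> real \<Rightarrow> real \<Rightarrow> real \<Rightarrow> (nat \<Rightarrow> real) \<Rightarrow> (nat \<Rightarrow> fvec) \<Rightarrow> ereal" where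
  "grand_pot vh \<eta> \<mu> \<beta> lam \<psi> =
     (if energy vh \<eta> \<mu> lam \<psi> = \<infinity> then \<infinity>
      else energy vh \<eta> \<mu> lam \<psi> + ereal (1 / \<beta>) * ent_term lam)"

definition num_sq_trace :: "real \<Rightarrow> (nat \<Rightarrow> real) \<Rightarrow> (nat \<Rightarrow> fvec) \<Rightarrow> ennreal" where
  "num_sq_trace c lam \<psi> =
     (\<Sum>\<^sub>\<infinity>j. ennreal (lam j) * (\<Sum>\<^sub>\<infinity>m. ennreal ((cmod (\<psi> j m))^2 * (numop m - c)^2)))"

definition Phi_id_plus :: "real \<Rightarrow> real \<Rightarrow> real" where
  "Phi_id_plus \<beta> \<nu> = (1 / \<beta>) * (\<Sum>\<^sub>\<infinity>p\<in>UNIV - {0}. ln (1 - exp (- \<beta> * (psq p - \<nu>))))"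

definition is_eff_chem_pot :: "(mom \<Rightarrow> real) \<Rightarrow> real \<Rightarrow> real \<Rightarrow> real \<Rightarrow> real \<Rightarrow> bool" where
  "is_eff_chem_pot vh \<eta> \<mu> \<beta> mt \<longleftrightarrow> mt < 0 \<and>
     (\<Sum>\<^sub>\<infinity>p. 1 / (exp (\<beta> * (psq p - mt)) - 1)) = (\<mu> - mt) * \<eta> / vh 0"

end

theory Submission
  imports Defs "HOL-Analysis.Analysis" "HOL-Real_Asymp.Real_Asymp"
begin

lemma summable_ennreal[simp]: "(f::'a \<Rightarrow> ennreal) summable_on A"
  by (rule nonneg_summable_on_complete) simp

lemma infsum_ennreal_SUP:
  fixes f :: "'a \<Rightarrow> ennreal"
  shows "infsum f A = (SUP F\<in>{F. finite F \<and> F\<subseteq>A}. sum f F)"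
  by (rule nonneg_infsum_complete) simp

lemma infsum_cmult_ennreal:
  fixes f :: "'a \<Rightarrow> ennreal"
  shows "infsum (\<lambda>x. c * f x) A = c * infsum f A"
  by (simp add: infsum_ennreal_SUP SUP_mult_left_ennreal sum_distrib_left)

lemma infsum_cmult_ennreal':
  fixes f :: "'a \<Rightarrow> ennreal"
  shows "infsum (\<lambda>x. f x * c) A = infsum f A * c"
  using infsum_cmult_ennreal[of c f A] by (simp add: mult.commute)

lemma infsum_add_ennreal:
  fixes f g :: "'a \<Rightarrow> ennreal"
  shows "infsum (\<lambda>x. f x + g x) A = infsum f A + infsum g A"
  by (rule infsum_add) (rule summable_ennreal)+

lemma infsum_mono_ennreal:
  fixes f g :: "'a \<Rightarrow> ennreal"
  assumes "\<And>x. x \<in> A \<Longrightarrow> f x \<le> g x"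
  shows "infsum f A \<le> infsum g A"
  by (rule infsum_mono) (auto intro: assms)

lemma sum_le_infsum_ennreal:
  fixes f :: "'a \<Rightarrow> ennreal"
  assumes "finite F" "F \<subseteq> A"
  shows "sum f F \<le> infsum f A"
  unfolding infsum_ennreal_SUP by (rule SUP_upper) (use assms in auto)

lemma single_le_infsum_ennreal:
  fixes f :: "'a \<Rightarrow> ennreal"
  assumes "a \<in> A"
  shows "f a \<le> infsum f A"
  using sum_le_infsum_ennreal[of "{a}" A f] assms by simp

lemma infsum_finite_sum_ennreal:
  fixes f :: "'b \<Rightarrow> 'a \<Rightarrow> ennreal"
  assumes "finite J"
  shows "(\<Sum>j\<in>J. infsum (f j) A) = infsum (\<lambda>x. \<Sum>j\<in>J. f j x) A"
  using assms
proof (induction J rule: finite_induct)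
  case empty then show ?case by simp
next
  case (insert j J)
  then show ?case by (simp add: infsum_add_ennreal)
qed

lemma infsum_swap_le_ennreal:
  fixes f :: "'a \<Rightarrow> 'b \<Rightarrow> ennreal"
  shows "(\<Sum>\<^sub>\<infinity>x\<in>A. \<Sum>\<^sub>\<infinity>y\<in>B. f x y) \<le> (\<Sum>\<^sub>\<infinity>y\<in>B. \<Sum>\<^sub>\<infinity>x\<in>A. f x y)"
proof -
  have "sum (\<lambda>x. \<Sum>\<^sub>\<infinity>y\<in>B. f x y) F \<le> (\<Sum>\<^sub>\<infinity>y\<in>B. \<Sum>\<^sub>\<infinity>x\<in>A. f x y)"
    if "finite F" "F \<subseteq> A" for F
  proof -
    have "sum (\<lambda>x. \<Sum>\<^sub>\<infinity>y\<in>B. f x y) F = (\<Sum>\<^sub>\<infinity>y\<in>B. \<Sum>x\<in>F. f x y)"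
      by (rule infsum_finite_sum_ennreal[OF that(1)])
    also have "\<dots> \<le> (\<Sum>\<^sub>\<infinity>y\<in>B. \<Sum>\<^sub>\<infinity>x\<in>A. f x y)"
      by (rule infsum_mono_ennreal) (rule sum_le_infsum_ennreal[OF that])
    finally show ?thesis .
  qed
  then show ?thesis
    unfolding infsum_ennreal_SUP[of "\<lambda>x. \<Sum>\<^sub>\<infinity>y\<in>B. f x y"] by (auto intro!: SUP_least)
qed

lemma infsum_swap_ennreal:
  fixes f :: "'a \<Rightarrow> 'b \<Rightarrow> ennreal"
  shows "(\<Sum>\<^sub>\<infinity>x\<in>A. \<Sum>\<^sub>\<infinity>y\<in>B. f x y) = (\<Sum>\<^sub>\<infinity>y\<in>B. \<Sum>\<^sub>\<infinity>x\<in>A. f x y)"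
  by (rule antisym) (rule infsum_swap_le_ennreal)+

lemma ennreal_infsum_real:
  fixes f :: "'a \<Rightarrow> real"
  assumes "f summable_on A" "\<And>x. x \<in> A \<Longrightarrow> f x \<ge> 0"
  shows "ennreal (infsum f A) = infsum (\<lambda>x. ennreal (f x)) A"
proof -
  have "ennreal (infsum f A) = (SUP F\<in>{F. finite F \<and> F \<subseteq> A}. (ennreal (sum f F)))"
    by (rule infsum_nonneg_is_SUPREMUM_ennreal[OF assms])
  also have "\<dots> = (SUP F\<in>{F. finite F \<and> F \<subseteq> A}. (\<Sum>x\<in>F. ennreal (f x)))"
    by (rule SUP_cong) (auto intro!: sum_ennreal[symmetric] assms)
  finally show ?thesis by (simp add: infsum_ennreal_SUP)
qed

lemma summable_of_ennreal_finite:
  fixes f :: "'a \<Rightarrow> real"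
  assumes "\<And>x. x \<in> A \<Longrightarrow> f x \<ge> 0" "infsum (\<lambda>x. ennreal (f x)) A < top"
  shows "f summable_on A"
proof (rule nonneg_bdd_above_summable_on)
  show "\<And>x. x \<in> A \<Longrightarrow> 0 \<le> f x" by fact
  obtain r where r: "infsum (\<lambda>x. ennreal (f x)) A = ennreal r" "r \<ge> 0"
    using assms(2) by (cases "infsum (\<lambda>x. ennreal (f x)) A") auto
  have "sum f F \<le> r" if "F \<subseteq> A" "finite F" for F
  proof -
    have "ennreal (sum f F) = (\<Sum>x\<in>F. ennreal (f x))"
      using that assms(1) by (subst sum_ennreal[symmetric]) auto
    also have "\<dots> \<le> ennreal r" using sum_le_infsum_ennreal[OF that(2,1), of "\<lambda>x. ennreal (f x)"] r by simp
    finally show ?thesis using r(2) by simp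
  qed
  then show "bdd_above (sum f ` {F. F \<subseteq> A \<and> finite F})" by (auto intro!: bdd_aboveI)
qed

lemma sqrt_sq_c:
  assumes "x \<ge> 0"
  shows "complex_of_real (sqrt x) * (complex_of_real (sqrt x) * z) = complex_of_real x * z"
proof -
  have "complex_of_real (sqrt x) * complex_of_real (sqrt x) = complex_of_real x"
    using assms by (metis of_real_mult real_sqrt_mult_self abs_of_nonneg)
  then show ?thesis by (metis mult.assoc)
qed

lemma dens_op_zero:
  assumes "fock_vec \<psi>"
  shows "dens_op 0 \<psi> m = complex_of_real (numop m) * \<psi> m"
proof (cases "finite (supp_cfg m)")
  case True
  have "dens_op 0 \<psi> m = (\<Sum>w\<in>supp_cfg m. cre w (ann w \<psi>) m)"
    by (simp add: dens_op_def supp_cfg_def)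
  also have "\<dots> = (\<Sum>w\<in>supp_cfg m. complex_of_real (real (m w)) * \<psi> m)"
  proof (rule sum.cong)
    fix w assume "w \<in> supp_cfg m"
    then have nz: "m w \<noteq> 0" by (simp add: supp_cfg_def)
    have k: "m w - 1 + 1 = m w" using nz by simp
    have e: "(m(w := m w - 1))(w := m w - 1 + 1) = m" using k by simp
    have "cre w (ann w \<psi>) m = complex_of_real (sqrt (real (m w))) * (complex_of_real (sqrt (real (m w))) * \<psi> m)"
      using nz by (simp add: cre_def ann_def e k)
    also have "\<dots> = complex_of_real (real (m w)) * \<psi> m"
      by (rule sqrt_sq_c) simp
    finally show "cre w (ann w \<psi>) m = complex_of_real (real (m w)) * \<psi> m" .
  qed simp
  also have "\<dots> = complex_of_real (numop m) * \<psi> m"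
    by (simp add: numop_def sum_distrib_right)
  finally show ?thesis .
next
  case False
  then have "\<psi> m = 0" using assms by (simp add: fock_vec_def)
  moreover have "{w. m (w - 0) \<noteq> 0} = supp_cfg m" by (simp add: supp_cfg_def)
  ultimately show ?thesis using False by (simp add: dens_op_def)
qed

lemma cnj_mult_self: "cnj z * z = (complex_of_real (cmod z))^2"
  by (metis complex_norm_square mult.commute of_real_power)

lemma cnj_mult_self': "cnj z * z = complex_of_real ((cmod z)^2)"
  by (metis complex_norm_square mult.commute)

lemma cnj_mult_self'': "z * cnj z = complex_of_real ((cmod z)^2)"
  by (metis complex_norm_square)

lemma fock_norm_real:
  assumes "fock_vec \<psi>"
  shows "fock_inner \<psi> \<psi> = complex_of_real (\<Sum>\<^sub>\<infinity>m. (cmod (\<psi> m))^2)"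
proof -
  have s: "(\<lambda>m. (cmod (\<psi> m))^2) summable_on UNIV" using assms by (simp add: fock_vec_def)
  have "fock_inner \<psi> \<psi> = (\<Sum>\<^sub>\<infinity>m. complex_of_real ((cmod (\<psi> m))^2))"
    by (simp add: fock_inner_def cnj_mult_self)
  also have "\<dots> = complex_of_real (\<Sum>\<^sub>\<infinity>m. (cmod (\<psi> m))^2)"
    by (rule infsumI, rule has_sum_of_real, rule has_sum_infsum[OF s])
  finally show ?thesis .
qed

lemma fock_norm_ennreal:
  assumes "fock_vec \<psi>" "fock_inner \<psi> \<psi> = 1"
  shows "(\<Sum>\<^sub>\<infinity>m. ennreal ((cmod (\<psi> m))^2)) = 1"
proof -
  have s: "(\<lambda>m. (cmod (\<psi> m))^2) summable_on UNIV" using assms by (simp add: fock_vec_def)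
  have "(\<Sum>\<^sub>\<infinity>m. (cmod (\<psi> m))^2) = 1" using fock_norm_real[OF assms(1)] assms(2) by simp
  then show ?thesis using ennreal_infsum_real[OF s] by simp
qed

lemma infsum_finite_sum_gen:
  fixes f :: "'b \<Rightarrow> 'a \<Rightarrow> complex"
  assumes "finite J" "\<And>j. j \<in> J \<Longrightarrow> f j summable_on A"
  shows "infsum (\<lambda>x. \<Sum>j\<in>J. f j x) A = (\<Sum>j\<in>J. infsum (f j) A)
     \<and> (\<lambda>x. \<Sum>j\<in>J. f j x) summable_on A"
  using assms
proof (induction J rule: finite_induct)
  case empty then show ?case by simp
next
  case (insert j J)
  then have IH: "infsum (\<lambda>x. \<Sum>j\<in>J. f j x) A = (\<Sum>j\<in>J. infsum (f j) A)"
     "(\<lambda>x. \<Sum>j\<in>J. f j x) summable_on A" by auto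
  have fj: "f j summable_on A" using insert by auto
  show ?case using insert(1,2) IH fj
    by (simp add: infsum_add summable_on_add)
qed

lemma ab_le_sq:
  fixes a b :: real
  assumes "a \<ge> 0" "b \<ge> 0"
  shows "a * b \<le> a^2 + b^2"
proof -
  have "0 \<le> (a - b)^2" by simp
  moreover have "(a - b)^2 = a^2 - 2*a*b + b^2" by (simp add: power2_diff)
  moreover have "0 \<le> a * b" using assms by simp
  ultimately show ?thesis by linarith
qed

lemma summable_cross:
  assumes "fock_vec \<phi>" "fock_vec \<psi>"
  shows "(\<lambda>m. cnj (\<phi> m) * \<psi> m) summable_on UNIV"
proof -
  have s1: "(\<lambda>m. (cmod (\<phi> m))^2) summable_on UNIV" "(\<lambda>m. (cmod (\<psi> m))^2) summable_on UNIV"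
    using assms by (auto simp: fock_vec_def)
  have S: "(\<lambda>m. (cmod (\<phi> m))^2 + (cmod (\<psi> m))^2) summable_on UNIV"
    using s1 by (rule summable_on_add)
  have "(\<lambda>m. norm (cnj (\<phi> m) * \<psi> m)) summable_on UNIV"
    by (rule summable_on_comparison_test[OF S]) (auto simp: norm_mult intro!: ab_le_sq)
  then show ?thesis by (rule abs_summable_summable)
qed

lemma bessel_finite:
  assumes st: "\<And>j. fock_vec (\<psi> j)" and on: "\<And>i j. fock_inner (\<psi> i) (\<psi> j) = (if i = j then 1 else 0)"
    and J: "finite J"
  shows "(\<Sum>j\<in>J. (cmod (\<psi> j m0))^2) \<le> 1"
proof -
  define s where "s = (\<Sum>j\<in>J. (cmod (\<psi> j m0))^2)"
  define a where "a j = cnj (\<psi> j m0)" for j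
  define u where "u m = (\<Sum>j\<in>J. a j * \<psi> j m)" for m
  have s0: "s \<ge> 0" by (simp add: s_def sum_nonneg)
  have exp: "cnj (u m) * u m = (\<Sum>i\<in>J. \<Sum>j\<in>J. cnj (a i) * a j * (cnj (\<psi> i m) * \<psi> j m))" for m
  proof -
    have "cnj (u m) = (\<Sum>i\<in>J. cnj (a i) * cnj (\<psi> i m))" by (simp add: u_def)
    then have "cnj (u m) * u m = (\<Sum>i\<in>J. \<Sum>j\<in>J. (cnj (a i) * cnj (\<psi> i m)) * (a j * \<psi> j m))"
      unfolding u_def by (simp only: sum_product)
    also have "\<dots> = (\<Sum>i\<in>J. \<Sum>j\<in>J. cnj (a i) * a j * (cnj (\<psi> i m) * \<psi> j m))"
      by (simp only: mult_ac)
    finally show ?thesis .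
  qed
  have summ: "(\<lambda>m. cnj (a i) * a j * (cnj (\<psi> i m) * \<psi> j m)) summable_on UNIV" for i j
    by (rule summable_on_cmult_right, rule summable_cross[OF st st])
  have inner: "infsum (\<lambda>m. \<Sum>j\<in>J. cnj (a i) * a j * (cnj (\<psi> i m) * \<psi> j m)) UNIV
       = (\<Sum>j\<in>J. cnj (a i) * a j * fock_inner (\<psi> i) (\<psi> j))
     \<and> (\<lambda>m. \<Sum>j\<in>J. cnj (a i) * a j * (cnj (\<psi> i m) * \<psi> j m)) summable_on UNIV" for i
    using infsum_finite_sum_gen[OF J, of "\<lambda>j m. cnj (a i) * a j * (cnj (\<psi> i m) * \<psi> j m)" UNIV] summ
    by (simp add: infsum_cmult_right' fock_inner_def)
  have tot: "infsum (\<lambda>m. cnj (u m) * u m) UNIV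
       = (\<Sum>i\<in>J. \<Sum>j\<in>J. cnj (a i) * a j * fock_inner (\<psi> i) (\<psi> j))
     \<and> (\<lambda>m. cnj (u m) * u m) summable_on UNIV"
    using infsum_finite_sum_gen[OF J, of "\<lambda>i m. \<Sum>j\<in>J. cnj (a i) * a j * (cnj (\<psi> i m) * \<psi> j m)" UNIV]
      inner unfolding exp by simp
  have "(\<Sum>i\<in>J. \<Sum>j\<in>J. cnj (a i) * a j * fock_inner (\<psi> i) (\<psi> j)) = (\<Sum>i\<in>J. cnj (a i) * a i)"
    by (simp add: on if_distrib J cong: if_cong)
  also have "\<dots> = (\<Sum>i\<in>J. complex_of_real ((cmod (\<psi> i m0))^2))"
    by (rule sum.cong) (simp_all add: a_def cnj_mult_self'' del: of_real_power)
  also have "\<dots> = complex_of_real s"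
    by (simp add: s_def del: of_real_power)
  finally have calc: "(\<Sum>i\<in>J. \<Sum>j\<in>J. cnj (a i) * a j * fock_inner (\<psi> i) (\<psi> j)) = complex_of_real s" .
  have eq1: "(\<lambda>m. cnj (u m) * u m) = (\<lambda>m. complex_of_real ((cmod (u m))^2))"
    by (rule ext) (rule cnj_mult_self')
  have tot2: "infsum (\<lambda>m. complex_of_real ((cmod (u m))^2)) UNIV = complex_of_real s"
    "(\<lambda>m. complex_of_real ((cmod (u m))^2)) summable_on UNIV"
    using tot unfolding eq1 calc by auto
  have rs: "(\<lambda>m. (cmod (u m))^2) summable_on UNIV"
    using summable_on_Re[OF tot2(2)] by (simp del: of_real_power)
  have ri: "infsum (\<lambda>m. (cmod (u m))^2) UNIV = s"
    using infsum_Re[OF tot2(2)] tot2(1) by (simp del: of_real_power)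
  have "(cmod (u m0))^2 \<le> infsum (\<lambda>m. (cmod (u m))^2) UNIV"
    using finite_sum_le_infsum[OF rs, of "{m0}"] by simp
  moreover have "u m0 = complex_of_real s"
  proof -
    have "u m0 = (\<Sum>i\<in>J. complex_of_real ((cmod (\<psi> i m0))^2))"
      unfolding u_def a_def by (rule sum.cong) (simp_all add: cnj_mult_self' del: of_real_power)
    then show ?thesis by (simp add: s_def del: of_real_power)
  qed
  ultimately have "s^2 \<le> s" using ri s0 by simp
  then have "s \<le> 1" using s0 by (cases "s = 0") (auto simp: power2_eq_square)
  then show ?thesis by (simp add: s_def)
qed

lemma bessel:
  assumes "is_state lam \<psi>"
  shows "(\<Sum>\<^sub>\<infinity>j. ennreal ((cmod (\<psi> j m0))^2)) \<le> 1"
proof -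
  have st: "\<And>j. fock_vec (\<psi> j)" "\<And>i j. fock_inner (\<psi> i) (\<psi> j) = (if i = j then 1 else 0)"
    using assms by (auto simp: is_state_def)
  show ?thesis unfolding infsum_ennreal_SUP
  proof (rule SUP_least)
    fix J :: "nat set" assume "J \<in> {F. finite F \<and> F \<subseteq> UNIV}"
    then have J: "finite J" by simp
    have "(\<Sum>j\<in>J. ennreal ((cmod (\<psi> j m0))^2)) = ennreal (\<Sum>j\<in>J. (cmod (\<psi> j m0))^2)"
      by (simp add: sum_ennreal)
    also have "\<dots> \<le> 1" using bessel_finite[OF st J] by simp
    finally show "(\<Sum>j\<in>J. ennreal ((cmod (\<psi> j m0))^2)) \<le> 1" .
  qed
qed

lemma geom_finite_le:
  fixes r :: real
  assumes "0 \<le> r" "r < 1" "finite I"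
  shows "(\<Sum>i\<in>I. r ^ i) \<le> 1 / (1 - r)"
proof -
  have "(\<Sum>i\<in>I. r ^ i) \<le> suminf (\<lambda>i. r ^ i)"
    by (rule sum_le_suminf) (use assms in \<open>auto intro: summable_geometric\<close>)
  also have "\<dots> = 1 / (1 - r)" using assms by (simp add: suminf_geometric)
  finally show ?thesis .
qed

lemma part_fun_finite:
  fixes r :: "'k \<Rightarrow> real"
  assumes r: "\<And>k. 0 \<le> r k" "\<And>k. r k < 1" and F: "finite F"
  shows "\<And>M. finite M \<Longrightarrow> M \<subseteq> {m::'k\<Rightarrow>nat. \<forall>k. k \<notin> F \<longrightarrow> m k = 0} \<Longrightarrow>
    (\<Sum>m\<in>M. \<Prod>k\<in>F. r k ^ m k) \<le> (\<Prod>k\<in>F. 1 / (1 - r k))"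
  using F
proof (induction F rule: finite_induct)
  case empty
  fix M :: "('k \<Rightarrow> nat) set"
  assume M: "finite M" "M \<subseteq> {m. \<forall>k. k \<notin> {} \<longrightarrow> m k = 0}"
  then have "M \<subseteq> {\<lambda>_. 0}" by auto
  then have "card M \<le> card {\<lambda>_::'k. 0::nat}" by (intro card_mono) auto
  then have "card M \<le> 1" by simp
  then show "(\<Sum>m\<in>M. \<Prod>k\<in>{}. r k ^ m k) \<le> (\<Prod>k\<in>{}. 1 / (1 - r k))" by simp
next
  case (insert a F)
  fix M :: "('k \<Rightarrow> nat) set"
  assume M: "finite M" "M \<subseteq> {m. \<forall>k. k \<notin> insert a F \<longrightarrow> m k = 0}"
  define PF where "PF = (\<Prod>k\<in>F. 1 / (1 - r k))"
  have PF0: "PF \<ge> 0" unfolding PF_def using r by (auto intro!: prod_nonneg simp: less_imp_le)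
  have aux: "(\<Sum>m\<in>{m\<in>M. m a = i}. r a ^ m a * (\<Prod>k\<in>F. r k ^ m k))
        = r a ^ i * (\<Sum>m\<in>{m\<in>M. m a = i}. (\<Prod>k\<in>F. r k ^ m k))" for i
  proof -
    have "(\<Sum>m\<in>{m\<in>M. m a = i}. r a ^ m a * (\<Prod>k\<in>F. r k ^ m k))
        = (\<Sum>m\<in>{m\<in>M. m a = i}. r a ^ i * (\<Prod>k\<in>F. r k ^ m k))"
      by (rule sum.cong) auto
    then show ?thesis by (simp only: sum_distrib_left)
  qed
  have "(\<Sum>m\<in>M. \<Prod>k\<in>insert a F. r k ^ m k) = (\<Sum>m\<in>M. r a ^ m a * (\<Prod>k\<in>F. r k ^ m k))"
    using insert(1,2) by simp
  also have "\<dots> = (\<Sum>i\<in>(\<lambda>m. m a) ` M. \<Sum>m\<in>{m\<in>M. m a = i}. r a ^ m a * (\<Prod>k\<in>F. r k ^ m k))"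
    by (rule sum.image_gen[OF M(1), of "\<lambda>m. r a ^ m a * (\<Prod>k\<in>F. r k ^ m k)" "\<lambda>m. m a"])
  also have "\<dots> = (\<Sum>i\<in>(\<lambda>m. m a) ` M. r a ^ i * (\<Sum>m\<in>{m\<in>M. m a = i}. (\<Prod>k\<in>F. r k ^ m k)))"
    by (rule sum.cong[OF refl], rule aux)
  also have "\<dots> \<le> (\<Sum>i\<in>(\<lambda>m. m a) ` M. r a ^ i * PF)"
  proof (rule sum_mono)
    fix i assume "i \<in> (\<lambda>m. m a) ` M"
    define Mi where "Mi = {m\<in>M. m a = i}"
    define h where "h m = m(a := 0)" for m :: "'k \<Rightarrow> nat"
    have inj: "inj_on h Mi"
    proof (rule inj_onI)
      fix x y assume xy: "x \<in> Mi" "y \<in> Mi" "h x = h y"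
      show "x = y"
      proof (rule ext)
        fix k show "x k = y k"
        proof (cases "k = a")
          case True then show ?thesis using xy(1,2) by (simp add: Mi_def)
        next
          case False then show ?thesis using fun_cong[OF xy(3), of k] by (simp add: h_def)
        qed
      qed
    qed
    have eq: "(\<Sum>m\<in>Mi. \<Prod>k\<in>F. r k ^ m k) = (\<Sum>m\<in>h ` Mi. \<Prod>k\<in>F. r k ^ m k)"
    proof -
      have "(\<Sum>m\<in>h ` Mi. \<Prod>k\<in>F. r k ^ m k) = (\<Sum>m\<in>Mi. \<Prod>k\<in>F. r k ^ h m k)"
        by (rule sum.reindex[OF inj, unfolded comp_def])
      also have "\<dots> = (\<Sum>m\<in>Mi. \<Prod>k\<in>F. r k ^ m k)"
        using insert(2) by (intro sum.cong prod.cong) (auto simp: h_def)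
      finally show ?thesis by simp
    qed
    have "finite (h ` Mi)" using M(1) by (simp add: Mi_def)
    moreover have "h ` Mi \<subseteq> {m. \<forall>k. k \<notin> F \<longrightarrow> m k = 0}"
      using M(2) by (auto simp: h_def Mi_def)
    ultimately have "(\<Sum>m\<in>h ` Mi. \<Prod>k\<in>F. r k ^ m k) \<le> PF"
      unfolding PF_def by (rule insert(3))
    then have "(\<Sum>m\<in>Mi. \<Prod>k\<in>F. r k ^ m k) \<le> PF" using eq by simp
    then show "r a ^ i * (\<Sum>m\<in>{m\<in>M. m a = i}. \<Prod>k\<in>F. r k ^ m k) \<le> r a ^ i * PF"
      unfolding Mi_def using r(1)[of a] by (intro mult_left_mono) auto
  qed
  also have "\<dots> = (\<Sum>i\<in>(\<lambda>m. m a) ` M. r a ^ i) * PF" by (simp add: sum_distrib_right)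
  also have "\<dots> \<le> (1 / (1 - r a)) * PF"
    by (rule mult_right_mono[OF geom_finite_le PF0]) (use r M in auto)
  also have "\<dots> = (\<Prod>k\<in>insert a F. 1 / (1 - r k))"
    using insert(1,2) by (simp add: PF_def)
  finally show "(\<Sum>m\<in>M. \<Prod>k\<in>insert a F. r k ^ m k) \<le> (\<Prod>k\<in>insert a F. 1 / (1 - r k))" .
qed

lemma part_fun_bound:
  fixes r :: "'k \<Rightarrow> real"
  assumes r: "\<And>k. 0 \<le> r k" "\<And>k. r k < 1"
    and sl: "(\<lambda>k. - ln (1 - r k)) summable_on UNIV"
  shows "(\<Sum>\<^sub>\<infinity>m. ennreal (if finite {k. m k \<noteq> 0} then (\<Prod>k\<in>{k. m k \<noteq> 0}. r k ^ m k) else 0))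
    \<le> ennreal (exp (\<Sum>\<^sub>\<infinity>k. - ln (1 - r k)))"
  unfolding infsum_ennreal_SUP
proof (rule SUP_least)
  fix M :: "('k \<Rightarrow> nat) set" assume "M \<in> {F. finite F \<and> F \<subseteq> UNIV}"
  then have M: "finite M" by simp
  define M' where "M' = {m\<in>M. finite {k. m k \<noteq> 0}}"
  define F where "F = (\<Union>m\<in>M'. {k. m k \<noteq> 0})"
  have M'f: "finite M'" using M by (simp add: M'_def)
  have Ff: "finite F" unfolding F_def using M'f by (auto simp: M'_def)
  have nn: "\<And>m. 0 \<le> (if finite {k. m k \<noteq> 0} then (\<Prod>k\<in>{k. m k \<noteq> 0}. r k ^ m k) else 0)"
    using r by (auto intro!: prod_nonneg)
  have "(\<Sum>m\<in>M. ennreal (if finite {k. m k \<noteq> 0} then (\<Prod>k\<in>{k. m k \<noteq> 0}. r k ^ m k) else 0))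
     = ennreal (\<Sum>m\<in>M. (if finite {k. m k \<noteq> 0} then (\<Prod>k\<in>{k. m k \<noteq> 0}. r k ^ m k) else 0))"
    using nn by (simp add: sum_ennreal)
  also have "(\<Sum>m\<in>M. (if finite {k. m k \<noteq> 0} then (\<Prod>k\<in>{k. m k \<noteq> 0}. r k ^ m k) else 0))
      = (\<Sum>m\<in>M'. (\<Prod>k\<in>{k. m k \<noteq> 0}. r k ^ m k))"
    unfolding M'_def using M by (simp add: sum.inter_filter[symmetric])
  also have "\<dots> = (\<Sum>m\<in>M'. (\<Prod>k\<in>F. r k ^ m k))"
  proof (rule sum.cong)
    fix m assume m: "m \<in> M'"
    then have sub: "{k. m k \<noteq> 0} \<subseteq> F" by (auto simp: F_def)
    show "(\<Prod>k\<in>{k. m k \<noteq> 0}. r k ^ m k) = (\<Prod>k\<in>F. r k ^ m k)"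
      by (rule prod.mono_neutral_left[OF Ff sub]) auto
  qed simp
  also have "\<dots> \<le> (\<Prod>k\<in>F. 1 / (1 - r k))"
    by (rule part_fun_finite[OF r Ff M'f]) (auto simp: F_def)
  also have "\<dots> = exp (\<Sum>k\<in>F. - ln (1 - r k))"
  proof -
    have "(\<Prod>k\<in>F. 1 / (1 - r k)) = (\<Prod>k\<in>F. exp (- ln (1 - r k)))"
    proof (rule prod.cong[OF refl])
      fix k have "1 - r k > 0" using r(2)[of k] by simp
      then show "1 / (1 - r k) = exp (- ln (1 - r k))" by (simp add: exp_minus inverse_eq_divide)
    qed
    also have "\<dots> = exp (\<Sum>k\<in>F. - ln (1 - r k))" by (rule exp_sum[symmetric, OF Ff])
    finally show ?thesis .
  qed
  also have "\<dots> \<le> exp (\<Sum>\<^sub>\<infinity>k. - ln (1 - r k))"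
  proof -
    have "(\<Sum>k\<in>F. - ln (1 - r k)) \<le> (\<Sum>\<^sub>\<infinity>k. - ln (1 - r k))"
      by (rule finite_sum_le_infsum[OF sl Ff]) (use r in \<open>auto intro!: ln_le_zero_iff[THEN iffD2]\<close>)
    then show ?thesis by simp
  qed
  finally show "(\<Sum>m\<in>M. ennreal (if finite {k. m k \<noteq> 0} then (\<Prod>k\<in>{k. m k \<noteq> 0}. r k ^ m k) else 0))
    \<le> ennreal (exp (\<Sum>\<^sub>\<infinity>k. - ln (1 - r k)))" by (simp add: ennreal_leI)
qed

lemma inv_one_minus_exp_le:
  fixes b :: real assumes "b > 0"
  shows "1 / (1 - exp (- b)) \<le> 1 + 1 / b"
proof -
  have eb: "exp b \<ge> 1 + b" by (rule exp_ge_add_one_self)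
  have pos: "exp b - 1 > 0" using assms eb by linarith
  have "1 / (1 - exp (- b)) = exp b / (exp b - 1)"
    by (simp add: exp_minus field_simps)
  also have "\<dots> = 1 + 1 / (exp b - 1)" using pos by (simp add: field_simps)
  also have "\<dots> \<le> 1 + 1 / b"
  proof -
    have bb: "b \<le> exp b - 1" using eb by linarith
    have "1 / (exp b - 1) \<le> 1 / b" by (rule divide_left_mono[OF bb]) (use pos assms in auto)
    then show ?thesis by simp
  qed
  finally show ?thesis .
qed

lemma sum_exp_abs_int:
  fixes b :: real and I :: "int set"
  assumes "b > 0" "finite I"
  shows "(\<Sum>n\<in>I. exp (- b * real_of_int n ^ 2)) \<le> 2 * (1 + 1 / b)"
proof -
  define q where "q = exp (- b)"
  have q: "0 \<le> q" "q < 1" using assms by (auto simp: q_def)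
  have key: "(\<Sum>n\<in>J. q ^ nat n) \<le> 1 + 1 / b" if J: "finite J" "J \<subseteq> {0..}" for J :: "int set"
  proof -
    have inj: "inj_on nat J"
    proof (rule inj_onI)
      fix x y assume "x \<in> J" "y \<in> J" "nat x = nat y"
      then show "x = y" using J(2) by (metis atLeast_iff eq_nat_nat_iff subsetD)
    qed
    have "(\<Sum>n\<in>J. q ^ nat n) = (\<Sum>k\<in>nat ` J. q ^ k)" by (simp add: sum.reindex[OF inj])
    also have "\<dots> \<le> 1 / (1 - q)" by (rule geom_finite_le) (use q J in auto)
    also have "\<dots> \<le> 1 + 1 / b" unfolding q_def by (rule inv_one_minus_exp_le[OF assms(1)])
    finally show ?thesis .
  qed
  have le: "exp (- b * real_of_int n ^ 2) \<le> q ^ nat \<bar>n\<bar>" for n :: int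
  proof -
    have "real_of_int \<bar>n\<bar> \<le> real_of_int n ^ 2"
    proof -
      have "\<bar>n\<bar> \<le> \<bar>n\<bar> * \<bar>n\<bar>"
      proof (cases "n = 0")
        case False
        then have "1 \<le> \<bar>n\<bar>" by simp
        then show ?thesis using mult_left_mono[of 1 "\<bar>n\<bar>" "\<bar>n\<bar>"] by simp
      qed simp
      then have "\<bar>n\<bar> \<le> n ^ 2" by (simp add: power2_eq_square abs_mult_self_eq)
      then show ?thesis by (metis of_int_le_iff of_int_power)
    qed
    then have "- b * real_of_int n ^ 2 \<le> - b * real_of_int \<bar>n\<bar>" using assms by simp
    then have "exp (- b * real_of_int n ^ 2) \<le> exp (- b * real_of_int \<bar>n\<bar>)" by simp
    also have "exp (- b * real_of_int \<bar>n\<bar>) = q ^ nat \<bar>n\<bar>"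
      by (simp add: q_def exp_of_nat_mult[symmetric] mult.commute)
    finally show ?thesis .
  qed
  have "(\<Sum>n\<in>I. exp (- b * real_of_int n ^ 2)) \<le> (\<Sum>n\<in>I. q ^ nat \<bar>n\<bar>)"
    by (rule sum_mono) (rule le)
  also have "\<dots> = (\<Sum>n\<in>{n\<in>I. n \<ge> 0}. q ^ nat \<bar>n\<bar>) + (\<Sum>n\<in>{n\<in>I. \<not> n \<ge> 0}. q ^ nat \<bar>n\<bar>)"
  proof -
    have eqI: "{n\<in>I. n \<ge> 0} \<union> {n\<in>I. \<not> n \<ge> 0} = I" by auto
    have "(\<Sum>n\<in>I. q ^ nat \<bar>n\<bar>) = (\<Sum>n\<in>{n\<in>I. n \<ge> 0} \<union> {n\<in>I. \<not> n \<ge> 0}. q ^ nat \<bar>n\<bar>)"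
      by (simp only: eqI)
    also have "\<dots> = (\<Sum>n\<in>{n\<in>I. n \<ge> 0}. q ^ nat \<bar>n\<bar>) + (\<Sum>n\<in>{n\<in>I. \<not> n \<ge> 0}. q ^ nat \<bar>n\<bar>)"
      by (rule sum.union_disjoint) (use assms(2) in auto)
    finally show ?thesis .
  qed
  also have "(\<Sum>n\<in>{n\<in>I. n \<ge> 0}. q ^ nat \<bar>n\<bar>) = (\<Sum>n\<in>{n\<in>I. n \<ge> 0}. q ^ nat n)"
    by (rule sum.cong) auto
  also have "(\<Sum>n\<in>{n\<in>I. \<not> n \<ge> 0}. q ^ nat \<bar>n\<bar>) = (\<Sum>n\<in>uminus ` {n\<in>I. \<not> n \<ge> 0}. q ^ nat n)"
    by (subst sum.reindex) (auto intro: inj_onI)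
  also have "(\<Sum>n\<in>{n\<in>I. n \<ge> 0}. q ^ nat n) + (\<Sum>n\<in>uminus ` {n\<in>I. \<not> n \<ge> 0}. q ^ nat n)
      \<le> (1 + 1 / b) + (1 + 1 / b)"
    by (intro add_mono key) (use assms(2) in auto)
  finally show ?thesis by simp
qed

definition gauss3 :: "real \<Rightarrow> mom \<Rightarrow> real" where
  "gauss3 b k = exp (- b * real_of_int (fst k) ^ 2) * exp (- b * real_of_int (fst (snd k)) ^ 2)
     * exp (- b * real_of_int (snd (snd k)) ^ 2)"

lemma gauss3_finite:
  assumes "b > 0" "finite F"
  shows "sum (gauss3 b) F \<le> (2 * (1 + 1 / b)) ^ 3"
proof -
  define I where "I = fst ` F \<union> (fst \<circ> snd) ` F \<union> (snd \<circ> snd) ` F"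
  have If: "finite I" using assms by (simp add: I_def)
  define f where "f n = exp (- b * real_of_int n ^ 2)" for n :: int
  have sub: "F \<subseteq> I \<times> I \<times> I" by (force simp: I_def)
  have "sum (gauss3 b) F \<le> sum (gauss3 b) (I \<times> I \<times> I)"
    by (rule sum_mono2) (use If sub in \<open>auto simp: gauss3_def\<close>)
  also have "sum (gauss3 b) (I \<times> I \<times> I) = (\<Sum>i\<in>I. \<Sum>jk\<in>I \<times> I. f i * (f (fst jk) * f (snd jk)))"
    by (subst sum.cartesian_product) (simp add: gauss3_def f_def mult.assoc case_prod_beta)
  also have "\<dots> = (\<Sum>i\<in>I. f i) * ((\<Sum>j\<in>I. f j) * (\<Sum>k\<in>I. f k))"
  proof -
    have inner: "(\<Sum>jk\<in>I \<times> I. f (fst jk) * f (snd jk)) = (\<Sum>j\<in>I. f j) * (\<Sum>k\<in>I. f k)"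
      by (simp add: sum_product sum.cartesian_product case_prod_beta)
    have "(\<Sum>i\<in>I. \<Sum>jk\<in>I \<times> I. f i * (f (fst jk) * f (snd jk)))
        = (\<Sum>i\<in>I. f i * (\<Sum>jk\<in>I \<times> I. f (fst jk) * f (snd jk)))"
      by (simp only: sum_distrib_left)
    also have "\<dots> = (\<Sum>i\<in>I. f i) * (\<Sum>jk\<in>I \<times> I. f (fst jk) * f (snd jk))"
      by (simp only: sum_distrib_right)
    finally show ?thesis by (simp only: inner)
  qed
  also have "\<dots> \<le> (2 * (1 + 1 / b)) * ((2 * (1 + 1 / b)) * (2 * (1 + 1 / b)))"
  proof -
    have s: "(\<Sum>i\<in>I. f i) \<le> 2 * (1 + 1 / b)" unfolding f_def by (rule sum_exp_abs_int[OF assms(1) If])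
    have n: "0 \<le> (\<Sum>i\<in>I. f i)" by (simp add: f_def sum_nonneg)
    show ?thesis using s n by (intro mult_mono) (auto intro: mult_nonneg_nonneg)
  qed
  also have "\<dots> = (2 * (1 + 1 / b)) ^ 3" by (simp add: power3_eq_cube)
  finally show ?thesis .
qed

lemma gauss3_summable:
  assumes "b > 0"
  shows "gauss3 b summable_on UNIV" "infsum (gauss3 b) UNIV \<le> (2 * (1 + 1 / b)) ^ 3"
proof -
  show s: "gauss3 b summable_on UNIV"
  proof (rule nonneg_bdd_above_summable_on)
    show "\<And>x. x \<in> UNIV \<Longrightarrow> 0 \<le> gauss3 b x" by (simp add: gauss3_def)
    show "bdd_above (sum (gauss3 b) ` {F. F \<subseteq> UNIV \<and> finite F})"
      by (rule bdd_aboveI[where M="(2 * (1 + 1 / b)) ^ 3"]) (use gauss3_finite[OF assms] in blast)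
  qed
  show "infsum (gauss3 b) UNIV \<le> (2 * (1 + 1 / b)) ^ 3"
    by (rule infsum_le_finite_sums[OF s]) (rule gauss3_finite[OF assms])
qed

lemma exp_psq_gauss3:
  "exp (- \<beta> * psq k) = gauss3 (4 * pi^2 * \<beta>) k"
  by (simp add: psq_def gauss3_def exp_add[symmetric] algebra_simps power_mult_distrib)

lemma psq_gauss:
  assumes "\<beta> > 0"
  shows "(\<lambda>k. exp (- \<beta> * psq k)) summable_on UNIV"
        "(\<Sum>\<^sub>\<infinity>k. exp (- \<beta> * psq k)) \<le> (2 * (1 + 1 / \<beta>)) ^ 3"
proof -
  have b: "4 * pi^2 * \<beta> > 0" using assms by simp
  show "(\<lambda>k. exp (- \<beta> * psq k)) summable_on UNIV"
    unfolding exp_psq_gauss3 by (rule gauss3_summable(1)[OF b])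
  have "(\<Sum>\<^sub>\<infinity>k. exp (- \<beta> * psq k)) \<le> (2 * (1 + 1 / (4 * pi^2 * \<beta>))) ^ 3"
    unfolding exp_psq_gauss3 by (rule gauss3_summable(2)[OF b])
  also have "\<dots> \<le> (2 * (1 + 1 / \<beta>)) ^ 3"
  proof -
    have "1 \<le> pi" using pi_gt3 by simp
    then have "1 \<le> pi^2" by (rule one_le_power)
    then have "4 * pi^2 \<ge> 1" by simp
    then have "1 / (4 * pi^2 * \<beta>) \<le> 1 / \<beta>" using assms by (simp add: frac_le)
    then have a: "2 * (1 + 1 / (4 * pi^2 * \<beta>)) \<le> 2 * (1 + 1 / \<beta>)"
      by (rule mult_left_mono[OF add_left_mono]) simp
    have b: "0 \<le> 2 * (1 + 1 / (4 * pi^2 * \<beta>))" using assms by (simp add: add_nonneg_nonneg)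
    show ?thesis by (rule power_mono[OF a b])
  qed
  finally show "(\<Sum>\<^sub>\<infinity>k. exp (- \<beta> * psq k)) \<le> (2 * (1 + 1 / \<beta>)) ^ 3" .
qed

definition Xb :: "real \<Rightarrow> real \<Rightarrow> real \<Rightarrow> real" where
  "Xb c0 vh0 \<eta> = 2 * (\<eta> powr (2/3) / c0) + (\<eta> powr (2/3) / c0) *
      ln (1 + 16 * vh0 * (1 + \<eta> powr (2/3) / c0)^3 / ((\<eta> powr (2/3) / c0) * \<eta>))"

definition Fb :: "real \<Rightarrow> real \<Rightarrow> real \<Rightarrow> real \<Rightarrow> real" where
  "Fb c0 vh0 v0 \<eta> = (1/c0 + Xb c0 vh0 \<eta>) * v0 / (2 * vh0) + v0^2 / (8 * \<eta> * vh0)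
     + (\<eta> powr (2/3) / c0) * ln (1 + (1/c0 + Xb c0 vh0 \<eta>) * \<eta> / vh0)"

lemma Fb_bigo:
  fixes c0 vh0 v0 :: real
  assumes "c0 > 0" "vh0 > 0" "v0 \<ge> 0"
  shows "Fb c0 vh0 v0 \<in> O(\<lambda>\<eta>. \<eta> powr (2/3) * ln \<eta>)"
  unfolding Fb_def[abs_def] Xb_def using assms by real_asymp

lemma Fb_const:
  fixes c0 vh0 v0 :: real
  assumes "c0 > 0" "vh0 > 0" "v0 \<ge> 0"
  obtains C N where "C > 0" "N \<ge> 1" "\<And>\<eta>. \<eta> \<ge> N \<Longrightarrow> Fb c0 vh0 v0 \<eta> \<le> C * \<eta> powr (2/3) * ln \<eta>"
proof -
  obtain c where c: "c > 0" "eventually (\<lambda>\<eta>. norm (Fb c0 vh0 v0 \<eta>) \<le> c * norm (\<eta> powr (2/3) * ln \<eta>)) at_top"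
    using landau_o.bigE[OF Fb_bigo[OF assms]] by blast
  then obtain N0 where N0: "\<And>\<eta>. \<eta> \<ge> N0 \<Longrightarrow> norm (Fb c0 vh0 v0 \<eta>) \<le> c * norm (\<eta> powr (2/3) * ln \<eta>)"
    by (auto simp: eventually_at_top_linorder)
  show ?thesis
  proof (rule that[of c "max N0 1"])
    show "c > 0" "max N0 1 \<ge> 1" using c by auto
    fix \<eta> :: real assume h: "\<eta> \<ge> max N0 1"
    then have A: "\<bar>Fb c0 vh0 v0 \<eta>\<bar> \<le> c * \<bar>\<eta> powr (2/3) * ln \<eta>\<bar>" using N0[of \<eta>] by simp
    have "\<bar>\<eta> powr (2/3) * ln \<eta>\<bar> = \<eta> powr (2/3) * ln \<eta>" using h by simp
    then have "\<bar>Fb c0 vh0 v0 \<eta>\<bar> \<le> c * (\<eta> powr (2/3) * ln \<eta>)" using A by simp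
    then show "Fb c0 vh0 v0 \<eta> \<le> c * \<eta> powr (2/3) * ln \<eta>" by (simp add: mult.assoc)
  qed
qed

lemma aux_frac:
  fixes E :: real assumes "E > 1"
  shows "1 / (1 - 1 / E) = 1 + 1 / (E - 1)"
proof -
  have "E \<noteq> 0" "E - 1 \<noteq> 0" using assms by auto
  then show ?thesis by (simp add: field_simps)
qed

lemma analytic_bound:
  fixes c0 vh0 v0 \<eta> \<beta> \<mu> x S :: real
  assumes c0: "c0 > 0" and vh0: "vh0 > 0" and v0: "v0 \<ge> 0" and eta: "\<eta> > 0" and beta: "\<beta> > 0"
    and hb: "c0 * \<eta> powr (-2/3) \<le> \<beta>"
    and hmu1: "- (\<eta> powr (2/3)) / c0 \<le> \<mu>" and hmu2: "\<mu> \<le> 1 / c0"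
    and x: "x > 0"
    and h1: "S = (\<mu> + x) * \<eta> / vh0"
    and h2: "1 / (exp (\<beta> * x) - 1) \<le> S"
    and h3: "S \<le> exp (- \<beta> * x) / (1 - exp (- \<beta> * x)) * (2 * (1 + 1 / \<beta>)) ^ 3"
  shows "(\<mu> + x) * v0 / (2 * vh0) + v0^2 / (8 * \<eta> * vh0) + (1 / \<beta>) * (- ln (1 - exp (- \<beta> * x)))
     \<le> Fb c0 vh0 v0 \<eta>"
proof -
  define a where "a = \<eta> powr (2/3) / c0"
  have a0: "a > 0" unfolding a_def using c0 eta by (intro divide_pos_pos) auto
  have ia: "1 / \<beta> \<le> a"
  proof -
    define p where "p = \<eta> powr (2/3)"
    have p0: "p > 0" using eta by (simp add: p_def)
    have "\<eta> powr (-2/3) = \<eta> powr (-(2/3))" by simp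
    also have "\<dots> = inverse p" by (simp only: powr_minus p_def)
    finally have "c0 * inverse p \<le> \<beta>" using hb by simp
    then have "c0 / p \<le> \<beta>" by (simp add: divide_inverse)
    then have cb: "c0 \<le> \<beta> * p" using p0 by (simp add: pos_divide_le_eq)
    have "p / c0 - 1 / \<beta> = (\<beta> * p - c0) / (\<beta> * c0)" using beta c0 by (simp add: field_simps)
    also have "\<dots> \<ge> 0" using cb beta c0 by (intro divide_nonneg_pos) auto
    finally show ?thesis by (simp add: a_def p_def)
  qed
  have ba: "\<beta> \<ge> 1 / a" using ia a0 beta by (simp add: field_simps)
  have ebx: "exp (\<beta> * x) > 1" using beta x by simp
  have g0: "1 / (exp (\<beta> * x) - 1) > 0" using ebx by simp
  have Spos: "S > 0" using h2 g0 by linarith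
  have Bpos: "\<mu> + x > 0" using Spos h1 eta vh0 by (simp add: zero_less_divide_iff zero_less_mult_iff)
  define X where "X = Xb c0 vh0 \<eta>"
  have X_eq: "X = 2 * a + a * ln (1 + 16 * vh0 * (1 + a)^3 / (a * \<eta>))"
    by (simp add: X_def Xb_def a_def)
  have lnpos: "ln (1 + 16 * vh0 * (1 + a)^3 / (a * \<eta>)) \<ge> 0"
    using a0 vh0 eta by simp
  have aln: "a * ln (1 + 16 * vh0 * (1 + a)^3 / (a * \<eta>)) \<ge> 0" using a0 lnpos by simp
  have xX: "x \<le> X"
  proof (cases "x \<le> 2 * a")
    case True then show ?thesis using X_eq aln by linarith
  next
    case False
    then have x2a: "x > 2 * a" by simp
    have "(1 / a) * x \<le> \<beta> * x" using ba x by (intro mult_right_mono) auto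
    then have bx: "\<beta> * x \<ge> x / a" by simp
    have "x / a > 2" using x2a a0 by (simp add: less_divide_eq)
    then have bx2: "\<beta> * x > 2" using bx by linarith
    have e2: "exp (- \<beta> * x) < 1 / 2"
    proof -
      have "exp (- \<beta> * x) < exp (-2)" using bx2 by simp
      also have "exp (-2::real) < 1 / 2"
      proof -
        have "exp (2::real) \<ge> 1 + 2" by (rule exp_ge_add_one_self)
        then show ?thesis by (simp add: exp_minus field_simps)
      qed
      finally show ?thesis .
    qed
    have e0: "exp (- \<beta> * x) > 0" by simp
    have e2': "2 * exp (- \<beta> * x) < 1" using e2 by simp
    have q: "1 - exp (- \<beta> * x) > 0" using e2' e0 by linarith
    have "1 \<le> 2 * (1 - exp (- \<beta> * x))" using e2' by (simp add: right_diff_distrib)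
    then have inv2: "1 / (1 - exp (- \<beta> * x)) \<le> 2" using q by (simp only: pos_divide_le_eq)
    have f1: "exp (- \<beta> * x) / (1 - exp (- \<beta> * x)) \<le> exp (- \<beta> * x) * 2"
    proof -
      have "exp (- \<beta> * x) / (1 - exp (- \<beta> * x)) = exp (- \<beta> * x) * (1 / (1 - exp (- \<beta> * x)))" by simp
      also have "\<dots> \<le> exp (- \<beta> * x) * 2" using inv2 e0 by (intro mult_left_mono) auto
      finally show ?thesis .
    qed
    have ge: "0 \<le> 2 * (1 + 1 / \<beta>)" using beta by simp
    have pb: "(2 * (1 + 1 / \<beta>)) ^ 3 \<le> (2 * (1 + a)) ^ 3"
      by (rule power_mono[OF _ ge]) (use ia in simp)
    have S1: "S \<le> (exp (- \<beta> * x) * 2) * (2 * (1 + a)) ^ 3"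
    proof -
      have "S \<le> exp (- \<beta> * x) / (1 - exp (- \<beta> * x)) * (2 * (1 + 1 / \<beta>)) ^ 3" by (rule h3)
      also have "\<dots> \<le> (exp (- \<beta> * x) * 2) * (2 * (1 + a)) ^ 3"
        by (rule mult_mono[OF f1 pb]) (use e0 ge in auto)
      finally show ?thesis .
    qed
    have ex: "exp (- \<beta> * x) \<le> exp (- (x / a))" using bx by simp
    have S2: "S \<le> exp (- (x / a)) * (16 * (1 + a) ^ 3)"
    proof -
      have "(exp (- \<beta> * x) * 2) * (2 * (1 + a)) ^ 3 \<le> (exp (- (x / a)) * 2) * (2 * (1 + a)) ^ 3"
        using ex a0 by (intro mult_right_mono) auto
      also have "\<dots> = exp (- (x / a)) * (16 * (1 + a) ^ 3)"
      proof -
        have "(2 * (1 + a)) ^ 3 = 8 * (1 + a) ^ 3" by (simp only: power_mult_distrib) simp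
        then show ?thesis by simp
      qed
      finally show ?thesis using S1 by linarith
    qed
    have "- a \<le> \<mu>" using hmu1 by (simp add: a_def)
    then have B2: "a \<le> \<mu> + x" using x2a by linarith
    have S3: "a * (\<eta> / vh0) \<le> S"
    proof -
      have "a * (\<eta> / vh0) \<le> (\<mu> + x) * (\<eta> / vh0)" by (rule mult_right_mono[OF B2]) (use eta vh0 in simp)
      then show ?thesis using h1 by simp
    qed
    define E where "E = exp (x / a)"
    have E0: "E > 0" by (simp add: E_def)
    have emx: "exp (- (x / a)) = 1 / E" by (simp add: E_def exp_minus divide_inverse)
    have "a * (\<eta> / vh0) \<le> (16 * (1 + a) ^ 3) / E" using S2 S3 emx by simp
    then have st: "E * (a * (\<eta> / vh0)) \<le> 16 * (1 + a) ^ 3" using E0 by (simp add: le_divide_eq mult.commute)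
    have pos: "a * (\<eta> / vh0) > 0" using a0 eta vh0 by simp
    have "E \<le> (16 * (1 + a) ^ 3) / (a * (\<eta> / vh0))" using st by (simp only: pos_le_divide_eq[OF pos])
    also have "\<dots> = 16 * vh0 * (1 + a)^3 / (a * \<eta>)" using vh0 by (simp add: field_simps)
    also have "\<dots> \<le> 1 + 16 * vh0 * (1 + a)^3 / (a * \<eta>)" by simp
    finally have ex1: "exp (x / a) \<le> 1 + 16 * vh0 * (1 + a)^3 / (a * \<eta>)" by (simp add: E_def)
    then have "ln (exp (x / a)) \<le> ln (1 + 16 * vh0 * (1 + a)^3 / (a * \<eta>))"
    proof -
      have "0 \<le> (1 + a)^3" using a0 by simp
      then have "0 \<le> 16 * vh0 * (1 + a)^3 / (a * \<eta>)" using vh0 a0 eta by simp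
      then show ?thesis using ex1 by (subst ln_le_cancel_iff) auto
    qed
    then have "x / a \<le> ln (1 + 16 * vh0 * (1 + a)^3 / (a * \<eta>))" by simp
    then have "x \<le> a * ln (1 + 16 * vh0 * (1 + a)^3 / (a * \<eta>))" using a0 by (simp add: divide_le_eq mult.commute)
    then show ?thesis using X_eq a0 by linarith
  qed
  have BX: "\<mu> + x \<le> 1 / c0 + X" using xX hmu2 by simp
  have t1: "(\<mu> + x) * v0 / (2 * vh0) \<le> (1 / c0 + X) * v0 / (2 * vh0)"
    using BX v0 vh0 by (intro divide_right_mono mult_right_mono) auto
  have t3: "(1 / \<beta>) * (- ln (1 - exp (- \<beta> * x))) \<le> a * ln (1 + (1 / c0 + X) * \<eta> / vh0)"
  proof -
    have bxp: "\<beta> * x > 0" using beta x by simp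
    have q1: "exp (- \<beta> * x) < 1" using bxp by simp
    have q: "0 < 1 - exp (- \<beta> * x)" "exp (- \<beta> * x) < 1" using q1 by auto
    have "- ln (1 - exp (- \<beta> * x)) = ln (1 / (1 - exp (- \<beta> * x)))" using q beta x by (simp add: ln_div)
    also have "1 / (1 - exp (- \<beta> * x)) = 1 + 1 / (exp (\<beta> * x) - 1)"
    proof -
      have "exp (- \<beta> * x) = 1 / exp (\<beta> * x)" by (simp add: exp_minus inverse_eq_divide)
      then show ?thesis using aux_frac[OF ebx] by simp
    qed
    also have "ln (1 + 1 / (exp (\<beta> * x) - 1)) \<le> ln (1 + (1 / c0 + X) * \<eta> / vh0)"
    proof -
      have "(\<mu> + x) * \<eta> / vh0 \<le> (1 / c0 + X) * \<eta> / vh0"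
        using BX eta vh0 by (intro divide_right_mono mult_right_mono) auto
      then have "1 / (exp (\<beta> * x) - 1) \<le> (1 / c0 + X) * \<eta> / vh0"
        using h2 h1 by linarith
      moreover have "0 < 1 + 1 / (exp (\<beta> * x) - 1)" using g0 by linarith
      ultimately show ?thesis by simp
    qed
    finally have L: "- ln (1 - exp (- \<beta> * x)) \<le> ln (1 + (1 / c0 + X) * \<eta> / vh0)" .
    have L0: "0 \<le> - ln (1 - exp (- \<beta> * x))" using q by simp
    have "(1 / \<beta>) * (- ln (1 - exp (- \<beta> * x))) \<le> a * (- ln (1 - exp (- \<beta> * x)))"
      using ia L0 by (rule mult_right_mono)
    also have "\<dots> \<le> a * ln (1 + (1 / c0 + X) * \<eta> / vh0)" using L a0 by (intro mult_left_mono) auto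
    finally show ?thesis .
  qed
  have "Fb c0 vh0 v0 \<eta> = (1/c0 + X) * v0 / (2 * vh0) + v0^2 / (8 * \<eta> * vh0) + a * ln (1 + (1/c0 + X) * \<eta> / vh0)"
    by (simp add: Fb_def X_def a_def)
  then show ?thesis using t1 t3 by linarith
qed

lemma psq_nonneg: "psq k \<ge> 0"
  by (simp add: psq_def)

lemma psq_zero: "psq 0 = 0"
  by (simp add: psq_def zero_prod_def)

lemma neg_ln_bound:
  fixes r :: real assumes "0 \<le> r" "r < 1"
  shows "- ln (1 - r) \<le> r / (1 - r)" "0 \<le> - ln (1 - r)"
proof -
  have p: "1 - r > 0" using assms by simp
  have "ln (1 / (1 - r)) \<le> 1 / (1 - r) - 1" by (rule ln_le_minus_one) (use p in simp)
  moreover have "ln (1 / (1 - r)) = - ln (1 - r)" using p by (simp add: ln_div)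
  moreover have "1 / (1 - r) - 1 = r / (1 - r)" using p by (simp add: field_simps)
  ultimately show "- ln (1 - r) \<le> r / (1 - r)" by simp
  show "0 \<le> - ln (1 - r)" using assms p by simp
qed

lemma aux_frac2:
  fixes E :: real assumes "E > 1"
  shows "1 / (E - 1) = (1 / E) / (1 - 1 / E)"
proof -
  have "E \<noteq> 0" "E - 1 \<noteq> 0" using assms by auto
  then show ?thesis by (simp add: field_simps)
qed

lemma chem_g:
  fixes \<beta> x :: real
  assumes beta: "\<beta> > 0" and x: "x > 0"
  defines "g \<equiv> \<lambda>p. 1 / (exp (\<beta> * (psq p + x)) - 1)"
  shows "g summable_on UNIV"
    and "1 / (exp (\<beta> * x) - 1) \<le> infsum g UNIV"
    and "infsum g UNIV \<le> exp (- \<beta> * x) / (1 - exp (- \<beta> * x)) * (2 * (1 + 1 / \<beta>)) ^ 3"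
proof -
  define c where "c = exp (- \<beta> * x) / (1 - exp (- \<beta> * x))"
  have e1: "exp (- \<beta> * x) < 1" using beta x by simp
  have c0: "c \<ge> 0" using e1 by (simp add: c_def)
  have gnn: "g p \<ge> 0" for p
  proof -
    have "\<beta> * (psq p + x) > 0" using beta x psq_nonneg[of p] by simp
    then have "exp (\<beta> * (psq p + x)) > 1" by simp
    then show ?thesis by (simp add: g_def)
  qed
  have gle: "g p \<le> c * exp (- \<beta> * psq p)" for p
  proof -
    define y where "y = \<beta> * (psq p + x)"
    have y0: "y > 0" using beta x psq_nonneg[of p] by (simp add: y_def)
    have ey: "exp (- y) = exp (- \<beta> * psq p) * exp (- \<beta> * x)"
      by (simp add: y_def exp_add[symmetric] algebra_simps)
    have eyle: "exp (- y) \<le> exp (- \<beta> * x)" using beta psq_nonneg[of p] by (simp add: y_def)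
    have d1: "1 - exp (- y) \<ge> 1 - exp (- \<beta> * x)" using eyle by simp
    have d0: "1 - exp (- \<beta> * x) > 0" using e1 by simp
    have "g p = exp (- y) / (1 - exp (- y))"
    proof -
      have E: "exp y > 1" using y0 by simp
      have "g p = 1 / (exp y - 1)" by (simp add: g_def y_def)
      also have "\<dots> = (1 / exp y) / (1 - 1 / exp y)" by (rule aux_frac2[OF E])
      also have "1 / exp y = exp (- y)" by (simp add: exp_minus inverse_eq_divide)
      finally show ?thesis .
    qed
    also have "\<dots> \<le> exp (- y) / (1 - exp (- \<beta> * x))"
      by (rule divide_left_mono[OF d1]) (use d0 d1 in auto)
    also have "\<dots> = c * exp (- \<beta> * psq p)" by (simp add: c_def ey)
    finally show ?thesis .
  qed
  have gs: "(\<lambda>p. c * exp (- \<beta> * psq p)) summable_on UNIV"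
    by (rule summable_on_cmult_right) (rule psq_gauss(1)[OF beta])
  show gsum: "g summable_on UNIV"
    by (rule summable_on_comparison_test[OF gs]) (use gle gnn in auto)
  have "g 0 \<le> infsum g UNIV"
    using finite_sum_le_infsum[OF gsum, of "{0}"] gnn by simp
  then show "1 / (exp (\<beta> * x) - 1) \<le> infsum g UNIV" by (simp add: g_def psq_zero)
  have "infsum g UNIV \<le> infsum (\<lambda>p. c * exp (- \<beta> * psq p)) UNIV"
    by (rule infsum_mono[OF gsum gs]) (rule gle)
  also have "\<dots> = c * infsum (\<lambda>p. exp (- \<beta> * psq p)) UNIV" by (rule infsum_cmult_right') 
  also have "\<dots> \<le> c * (2 * (1 + 1 / \<beta>)) ^ 3"
    by (rule mult_left_mono[OF psq_gauss(2)[OF beta] c0])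
  finally show "infsum g UNIV \<le> exp (- \<beta> * x) / (1 - exp (- \<beta> * x)) * (2 * (1 + 1 / \<beta>)) ^ 3"
    by (simp add: c_def)
qed

lemma chem_r:
  fixes \<beta> x :: real
  assumes beta: "\<beta> > 0" and x: "x > 0"
  defines "r \<equiv> \<lambda>k. exp (- \<beta> * (psq k + x))"
  shows "\<And>k. 0 \<le> r k" "\<And>k. r k < 1"
    and "(\<lambda>k. - ln (1 - r k)) summable_on UNIV"
    and "(\<Sum>\<^sub>\<infinity>k. - ln (1 - r k)) = - ln (1 - exp (- \<beta> * x)) - (\<Sum>\<^sub>\<infinity>k\<in>UNIV - {0}. ln (1 - r k))"
proof -
  show r0: "\<And>k. 0 \<le> r k" by (simp add: r_def)
  have rle: "r k \<le> exp (- \<beta> * x)" for k using beta psq_nonneg[of k] by (simp add: r_def)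
  have e1: "exp (- \<beta> * x) < 1" using beta x by simp
  show r1: "\<And>k. r k < 1" using rle e1 by (meson le_less_trans)
  define c where "c = exp (- \<beta> * x) / (1 - exp (- \<beta> * x))"
  have le: "- ln (1 - r k) \<le> c * exp (- \<beta> * psq k)" for k
  proof -
    have "- ln (1 - r k) \<le> r k / (1 - r k)" by (rule neg_ln_bound(1)[OF r0 r1])
    also have "\<dots> \<le> r k / (1 - exp (- \<beta> * x))"
    proof -
      have p1: "1 - r k > 0" using r1[of k] by simp
      have p2: "1 - exp (- \<beta> * x) > 0" using e1 by simp
      have "1 - exp (- \<beta> * x) \<le> 1 - r k" using rle[of k] by simp
      then show ?thesis by (rule divide_left_mono[OF _ r0 mult_pos_pos[OF p1 p2]])
    qed
    also have "\<dots> = c * exp (- \<beta> * psq k)"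
      by (simp add: r_def c_def exp_add[symmetric] algebra_simps)
    finally show ?thesis .
  qed
  have gs: "(\<lambda>p. c * exp (- \<beta> * psq p)) summable_on UNIV"
    by (rule summable_on_cmult_right) (rule psq_gauss(1)[OF beta])
  show s: "(\<lambda>k. - ln (1 - r k)) summable_on UNIV"
    by (rule summable_on_comparison_test[OF gs]) (use le neg_ln_bound(2)[OF r0 r1] in auto)
  have s2: "(\<lambda>k. - ln (1 - r k)) summable_on (UNIV - {0})"
    by (rule summable_on_subset_banach[OF s]) auto
  have "(\<Sum>\<^sub>\<infinity>k. - ln (1 - r k)) = (\<Sum>\<^sub>\<infinity>k\<in>insert 0 (UNIV - {0}). - ln (1 - r k))" by simp
  also have "\<dots> = - ln (1 - r 0) + (\<Sum>\<^sub>\<infinity>k\<in>UNIV - {0}. - ln (1 - r k))"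
    by (rule infsum_insert[OF s2]) simp
  also have "(\<Sum>\<^sub>\<infinity>k\<in>UNIV - {0}. - ln (1 - r k)) = - (\<Sum>\<^sub>\<infinity>k\<in>UNIV - {0}. ln (1 - r k))"
    by (rule infsum_uminus)
  also have "r 0 = exp (- \<beta> * x)" by (simp add: r_def psq_zero)
  finally show "(\<Sum>\<^sub>\<infinity>k. - ln (1 - r k)) = - ln (1 - exp (- \<beta> * x)) - (\<Sum>\<^sub>\<infinity>k\<in>UNIV - {0}. ln (1 - r k))"
    by simp
qed

lemma state_facts:
  assumes st: "is_state lam \<psi>"
  shows "\<And>j. 0 \<le> lam j" "\<And>j. lam j \<le> 1" "(\<Sum>\<^sub>\<infinity>j. ennreal (lam j)) = 1"
    "\<And>j. (\<Sum>\<^sub>\<infinity>m. ennreal ((cmod (\<psi> j m))^2)) = 1"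
    "\<And>j m. \<psi> j m \<noteq> 0 \<Longrightarrow> finite (supp_cfg m)"
    "\<And>m. (\<Sum>\<^sub>\<infinity>j. ennreal ((cmod (\<psi> j m))^2)) \<le> 1"
proof -
  have l0: "\<And>j. 0 \<le> lam j" and hs: "(lam has_sum 1) UNIV" and fv: "\<And>j. fock_vec (\<psi> j)"
    and on: "\<And>i j. fock_inner (\<psi> i) (\<psi> j) = (if i = j then 1 else 0)"
    using st by (auto simp: is_state_def)
  show "\<And>j. 0 \<le> lam j" by (rule l0)
  have ls: "lam summable_on UNIV" and li: "infsum lam UNIV = 1" using hs by (auto simp: has_sum_iff)
  show "\<And>j. lam j \<le> 1"
  proof -
    fix j show "lam j \<le> 1" using finite_sum_le_infsum[OF ls, of "{j}"] l0 li by simp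
  qed
  show "(\<Sum>\<^sub>\<infinity>j. ennreal (lam j)) = 1" using ennreal_infsum_real[OF ls] l0 li by simp
  show "\<And>j. (\<Sum>\<^sub>\<infinity>m. ennreal ((cmod (\<psi> j m))^2)) = 1"
    by (rule fock_norm_ennreal[OF fv]) (simp add: on)
  show "\<And>j m. \<psi> j m \<noteq> 0 \<Longrightarrow> finite (supp_cfg m)"
    using fv by (auto simp: fock_vec_def)
  show "\<And>m. (\<Sum>\<^sub>\<infinity>j. ennreal ((cmod (\<psi> j m))^2)) \<le> 1" by (rule bessel[OF st])
qed

lemma W_exp:
  fixes \<beta> x :: real
  assumes "finite (supp_cfg m)"
  shows "(\<Prod>k\<in>supp_cfg m. exp (- \<beta> * (psq k + x)) ^ m k) = exp (- \<beta> * (kin m + x * numop m))"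
proof -
  have "(\<Prod>k\<in>supp_cfg m. exp (- \<beta> * (psq k + x)) ^ m k) = (\<Prod>k\<in>supp_cfg m. exp (- \<beta> * ((psq k + x) * real (m k))))"
    by (rule prod.cong[OF refl]) (simp add: exp_of_nat_mult[symmetric] mult_ac)
  also have "\<dots> = exp (\<Sum>k\<in>supp_cfg m. - \<beta> * ((psq k + x) * real (m k)))"
    by (rule exp_sum[symmetric, OF assms])
  also have "(\<Sum>k\<in>supp_cfg m. - \<beta> * ((psq k + x) * real (m k))) = - \<beta> * (kin m + x * numop m)"
  proof -
    have "- \<beta> * (kin m + x * numop m) = - \<beta> * ((\<Sum>k\<in>supp_cfg m. psq k * real (m k)) + x * (\<Sum>k\<in>supp_cfg m. real (m k)))"
      by (simp add: kin_def numop_def)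
    also have "\<dots> = (\<Sum>k\<in>supp_cfg m. - \<beta> * ((psq k + x) * real (m k)))"
      unfolding sum_distrib_left sum.distrib[symmetric] by (rule sum.cong) (simp_all add: algebra_simps)
    finally show ?thesis by simp
  qed
  finally show ?thesis .
qed

lemma gibbs_pointwise:
  fixes P l E L q \<beta> :: real
  assumes P: "P \<ge> 0" and l: "0 \<le> l" "l \<le> 1" and q: "P \<noteq> 0 \<Longrightarrow> q = exp (- \<beta> * E - L)"
    and q0: "q \<ge> 0"
  shows "P * (- (l * ln l)) + P * l \<le> \<beta> * (l * (P * E)) + L * (l * P) + P * q"
proof (cases "P = 0")
  case True then show ?thesis by simp
next
  case False
  then have qq: "q = exp (- \<beta> * E - L)" by (rule q)
  have "- (l * ln l) + l \<le> \<beta> * (l * E) + L * l + q"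
  proof (cases "l = 0")
    case True then show ?thesis using q0 by simp
  next
    case False
    then have l0: "l > 0" using l by simp
    have qp: "q > 0" using qq by simp
    have lnq: "ln q = - \<beta> * E - L" using qq by simp
    have "ln (q / l) \<le> q / l - 1" by (rule ln_le_minus_one) (use qp l0 in simp)
    then have "l * ln (q / l) \<le> l * (q / l - 1)" using l0 by (simp add: mult_left_mono)
    moreover have "ln (q / l) = ln q - ln l" using qp l0 by (simp add: ln_div)
    moreover have "l * (q / l - 1) = q - l" using l0 by (simp add: field_simps)
    ultimately have "l * (ln q - ln l) \<le> q - l" by simp
    then show ?thesis using lnq by (simp add: algebra_simps)
  qed
  then have "P * (- (l * ln l) + l) \<le> P * (\<beta> * (l * E) + L * l + q)" using P by (rule mult_left_mono)
  then show ?thesis by (simp add: algebra_simps)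
qed

lemma ennr_prod: "0 \<le> a \<Longrightarrow> 0 \<le> b \<Longrightarrow> ennreal a * ennreal b = ennreal (a * b)"
  by (simp add: ennreal_mult)

lemma ennr_sum: "0 \<le> a \<Longrightarrow> 0 \<le> b \<Longrightarrow> ennreal a + ennreal b = ennreal (a + b)"
  by simp

lemma kin_nonneg: "kin m \<ge> 0"
  by (simp add: kin_def sum_nonneg psq_def)

lemma numop_nonneg: "numop m \<ge> 0"
  by (simp add: numop_def sum_nonneg)

lemma gibbs_sum:
  fixes \<beta> x :: real
  assumes st: "is_state lam \<psi>" and beta: "\<beta> > 0" and x: "x > 0"
    and Ls: "(\<lambda>k. - ln (1 - exp (- \<beta> * (psq k + x)))) summable_on UNIV"
  shows "(\<Sum>\<^sub>\<infinity>j. ennreal (- (lam j * ln (lam j))))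
    \<le> ennreal \<beta> * (\<Sum>\<^sub>\<infinity>j. ennreal (lam j) * (\<Sum>\<^sub>\<infinity>m. ennreal ((cmod (\<psi> j m))^2 * (kin m + x * numop m))))
      + ennreal (\<Sum>\<^sub>\<infinity>k. - ln (1 - exp (- \<beta> * (psq k + x))))"
proof -
  define r where "r k = exp (- \<beta> * (psq k + x))" for k
  define L where "L = (\<Sum>\<^sub>\<infinity>k. - ln (1 - r k))"
  define E where "E m = kin m + x * numop m" for m
  define P where "P j m = (cmod (\<psi> j m))^2" for j m
  define W where "W m = (if finite {k. m k \<noteq> 0} then (\<Prod>k\<in>{k. m k \<noteq> 0}. r k ^ m k) else 0)" for m
  define q where "q m = W m * exp (- L)" for m
  have sf: "\<And>j. 0 \<le> lam j" "\<And>j. lam j \<le> 1" "(\<Sum>\<^sub>\<infinity>j. ennreal (lam j)) = 1"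
    "\<And>j. (\<Sum>\<^sub>\<infinity>m. ennreal (P j m)) = 1"
    "\<And>j m. \<psi> j m \<noteq> 0 \<Longrightarrow> finite (supp_cfg m)"
    "\<And>m. (\<Sum>\<^sub>\<infinity>j. ennreal (P j m)) \<le> 1"
    using state_facts[OF st] by (simp_all add: P_def)
  have r0: "0 \<le> r k" for k by (simp add: r_def)
  have r1: "r k < 1" for k
  proof -
    have "\<beta> * (psq k + x) > 0" using beta x psq_nonneg[of k] by simp
    then show ?thesis by (simp add: r_def)
  qed
  have Ls': "(\<lambda>k. - ln (1 - r k)) summable_on UNIV" using Ls by (simp add: r_def)
  have L0: "L \<ge> 0" unfolding L_def by (rule infsum_nonneg) (use r0 r1 in simp)
  have E0: "E m \<ge> 0" for m using kin_nonneg[of m] numop_nonneg[of m] x by (simp add: E_def)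
  have P0: "P j m \<ge> 0" for j m by (simp add: P_def)
  have W0: "W m \<ge> 0" for m using r0 by (simp add: W_def prod_nonneg)
  have q0: "q m \<ge> 0" for m using W0 by (simp add: q_def)
  have part: "(\<Sum>\<^sub>\<infinity>m. ennreal (W m)) \<le> ennreal (exp L)"
    unfolding W_def L_def by (rule part_fun_bound[OF r0 r1 Ls'])
  have qexp: "q m = exp (- \<beta> * E m - L)" if "P j m \<noteq> 0" for j m
  proof -
    have "\<psi> j m \<noteq> 0" using that by (simp add: P_def)
    then have fin: "finite (supp_cfg m)" by (rule sf(5))
    then have "W m = exp (- \<beta> * E m)"
      using W_exp[OF fin, of \<beta> x] by (simp add: W_def supp_cfg_def r_def E_def)
    then show ?thesis by (simp add: q_def exp_diff exp_minus divide_inverse)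
  qed
  define H where "H = (\<Sum>\<^sub>\<infinity>j. ennreal (- (lam j * ln (lam j))))"
  define T where "T = (\<Sum>\<^sub>\<infinity>j. ennreal (lam j) * (\<Sum>\<^sub>\<infinity>m. ennreal (P j m * E m)))"
  have eta0: "0 \<le> - (lam j * ln (lam j))" for j
    using sf(1)[of j] sf(2)[of j] by (cases "lam j = 0") (auto simp: mult_nonneg_nonpos)
  have pw: "ennreal (P j m) * ennreal (- (lam j * ln (lam j))) + ennreal (lam j) * ennreal (P j m)
     \<le> ennreal \<beta> * (ennreal (lam j) * ennreal (P j m * E m)) + ennreal L * (ennreal (lam j) * ennreal (P j m))
       + ennreal (P j m) * ennreal (q m)" for j m
  proof -
    have ineq: "P j m * (- (lam j * ln (lam j))) + P j m * lam j
       \<le> \<beta> * (lam j * (P j m * E m)) + L * (lam j * P j m) + P j m * q m"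
      by (rule gibbs_pointwise[OF P0 sf(1) sf(2) _ q0]) (rule qexp)
    have "ennreal (P j m) * ennreal (- (lam j * ln (lam j))) + ennreal (lam j) * ennreal (P j m)
        = ennreal (P j m * (- (lam j * ln (lam j))) + P j m * lam j)"
      using P0[of j m] eta0[of j] sf(1)[of j]
      by (simp only: ennr_prod ennr_sum mult_nonneg_nonneg mult.commute[of "lam j"])
    also have "\<dots> \<le> ennreal (\<beta> * (lam j * (P j m * E m)) + L * (lam j * P j m) + P j m * q m)"
      by (rule ennreal_leI[OF ineq])
    also have "\<dots> = ennreal \<beta> * (ennreal (lam j) * ennreal (P j m * E m)) + ennreal L * (ennreal (lam j) * ennreal (P j m))
       + ennreal (P j m) * ennreal (q m)"
    proof -
      have n1: "0 \<le> P j m * E m" "0 \<le> lam j * (P j m * E m)" "0 \<le> lam j * P j m" "0 \<le> P j m * q m"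
        "0 \<le> \<beta> * (lam j * (P j m * E m))" "0 \<le> L * (lam j * P j m)"
        using P0[of j m] E0[of m] sf(1)[of j] beta L0 q0[of m] by simp_all
      have "ennreal (\<beta> * (lam j * (P j m * E m)) + L * (lam j * P j m) + P j m * q m)
          = ennreal (\<beta> * (lam j * (P j m * E m))) + ennreal (L * (lam j * P j m)) + ennreal (P j m * q m)"
        using n1 by (simp add: add_nonneg_nonneg)
      also have "ennreal (\<beta> * (lam j * (P j m * E m))) = ennreal \<beta> * (ennreal (lam j) * ennreal (P j m * E m))"
        using n1 beta sf(1)[of j] by (simp add: ennr_prod)
      also have "ennreal (L * (lam j * P j m)) = ennreal L * (ennreal (lam j) * ennreal (P j m))"
        using n1 L0 sf(1)[of j] P0[of j m] by (simp add: ennr_prod)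
      also have "ennreal (P j m * q m) = ennreal (P j m) * ennreal (q m)"
        using P0[of j m] q0[of m] by (simp add: ennr_prod)
      finally show ?thesis .
    qed
    finally show ?thesis .
  qed
  have sum_m_lhs: "(\<Sum>\<^sub>\<infinity>m. ennreal (P j m) * ennreal (- (lam j * ln (lam j))) + ennreal (lam j) * ennreal (P j m))
      = ennreal (- (lam j * ln (lam j))) + ennreal (lam j)" for j
    by (simp add: infsum_add_ennreal infsum_cmult_ennreal infsum_cmult_ennreal' sf(4))
  have sum_m_rhs: "(\<Sum>\<^sub>\<infinity>m. ennreal \<beta> * (ennreal (lam j) * ennreal (P j m * E m)) + ennreal L * (ennreal (lam j) * ennreal (P j m))
       + ennreal (P j m) * ennreal (q m))
      = ennreal \<beta> * (ennreal (lam j) * (\<Sum>\<^sub>\<infinity>m. ennreal (P j m * E m))) + ennreal L * ennreal (lam j)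
        + (\<Sum>\<^sub>\<infinity>m. ennreal (P j m) * ennreal (q m))" for j
    by (simp add: infsum_add_ennreal infsum_cmult_ennreal infsum_cmult_ennreal' sf(4))
  have step1: "ennreal (- (lam j * ln (lam j))) + ennreal (lam j)
     \<le> ennreal \<beta> * (ennreal (lam j) * (\<Sum>\<^sub>\<infinity>m. ennreal (P j m * E m))) + ennreal L * ennreal (lam j)
        + (\<Sum>\<^sub>\<infinity>m. ennreal (P j m) * ennreal (q m))" for j
    unfolding sum_m_lhs[symmetric] sum_m_rhs[symmetric] by (rule infsum_mono_ennreal) (rule pw)
  have lhs_j: "(\<Sum>\<^sub>\<infinity>j. ennreal (- (lam j * ln (lam j))) + ennreal (lam j)) = H + 1"
    by (simp add: infsum_add_ennreal H_def sf(3))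
  have rhs_j: "(\<Sum>\<^sub>\<infinity>j. ennreal \<beta> * (ennreal (lam j) * (\<Sum>\<^sub>\<infinity>m. ennreal (P j m * E m))) + ennreal L * ennreal (lam j)
        + (\<Sum>\<^sub>\<infinity>m. ennreal (P j m) * ennreal (q m)))
      = ennreal \<beta> * T + ennreal L + (\<Sum>\<^sub>\<infinity>j. \<Sum>\<^sub>\<infinity>m. ennreal (P j m) * ennreal (q m))"
    by (simp add: infsum_add_ennreal infsum_cmult_ennreal T_def sf(3))
  have qsum: "(\<Sum>\<^sub>\<infinity>j. \<Sum>\<^sub>\<infinity>m. ennreal (P j m) * ennreal (q m)) \<le> 1"
  proof -
    have "(\<Sum>\<^sub>\<infinity>j. \<Sum>\<^sub>\<infinity>m. ennreal (P j m) * ennreal (q m)) = (\<Sum>\<^sub>\<infinity>m. \<Sum>\<^sub>\<infinity>j. ennreal (P j m) * ennreal (q m))"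
      by (rule infsum_swap_ennreal)
    also have "\<dots> = (\<Sum>\<^sub>\<infinity>m. (\<Sum>\<^sub>\<infinity>j. ennreal (P j m)) * ennreal (q m))"
      by (simp add: infsum_cmult_ennreal')
    also have "\<dots> \<le> (\<Sum>\<^sub>\<infinity>m. ennreal (q m))"
    proof (rule infsum_mono_ennreal)
      fix m show "(\<Sum>\<^sub>\<infinity>j. ennreal (P j m)) * ennreal (q m) \<le> ennreal (q m)"
        using mult_right_mono[OF sf(6)[of m], of "ennreal (q m)"] by simp
    qed
    also have "\<dots> = (\<Sum>\<^sub>\<infinity>m. ennreal (W m)) * ennreal (exp (- L))"
      using W0 by (simp add: q_def ennreal_mult infsum_cmult_ennreal')
    also have "\<dots> \<le> ennreal (exp L) * ennreal (exp (- L))"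
      by (rule mult_right_mono[OF part]) simp
    also have "\<dots> = 1" by (simp add: ennreal_mult[symmetric] exp_minus)
    finally show ?thesis .
  qed
  have "H + 1 \<le> ennreal \<beta> * T + ennreal L + (\<Sum>\<^sub>\<infinity>j. \<Sum>\<^sub>\<infinity>m. ennreal (P j m) * ennreal (q m))"
    unfolding lhs_j[symmetric] rhs_j[symmetric] by (rule infsum_mono_ennreal) (rule step1)
  also have "\<dots> \<le> ennreal \<beta> * T + ennreal L + 1" using qsum by (rule add_left_mono)
  finally have "1 + H \<le> 1 + (ennreal \<beta> * T + ennreal L)" by (simp add: ac_simps)
  then have "H \<le> ennreal \<beta> * T + ennreal L" by (simp add: ennreal_add_left_cancel_le)
  then show ?thesis by (simp add: H_def T_def P_def E_def L_def r_def)
qed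

lemma diag_identity:
  fixes \<eta> vh0 v0 \<mu> x kn n :: real
  assumes eta: "\<eta> > 0" and vh0: "vh0 > 0"
  defines "\<kappa> \<equiv> vh0 / (2 * \<eta>)" and "c \<equiv> (\<mu> + x + v0 / (2 * \<eta>)) * \<eta> / vh0"
    and "d \<equiv> kn - (\<mu> + v0 / (2 * \<eta>)) * n"
  shows "max d 0 + \<kappa> * n^2 + \<kappa> * c^2 = max (- d) 0 + (kn + x * n) + \<kappa> * (n - c)^2"
proof -
  define A where "A = \<mu> + v0 / (2 * \<eta>)"
  have k2c: "2 * \<kappa> * c = A + x" unfolding \<kappa>_def c_def A_def using eta vh0 by (simp add: field_simps)
  have sq: "\<kappa> * (n - c)^2 = \<kappa> * n^2 - (2 * \<kappa> * c) * n + \<kappa> * c^2"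
    by (simp add: power2_diff algebra_simps)
  have mx: "max d 0 = d + max (- d) 0" by auto
  have dd: "d = kn - A * n" by (simp add: d_def A_def)
  show ?thesis unfolding mx sq k2c dd by (simp add: algebra_simps)
qed

lemma norm_dens0:
  assumes "fock_vec \<psi>"
  shows "(cmod (dens_op 0 \<psi> m))^2 = (numop m)^2 * (cmod (\<psi> m))^2"
  by (simp add: dens_op_zero[OF assms] norm_mult power_mult_distrib)

lemma energy_sum:
  fixes \<eta> \<mu> x :: real
  assumes st: "is_state lam \<psi>" and eta: "\<eta> > 0" and vh: "\<And>p. vh p \<ge> 0" and vh0: "vh 0 > 0"
    and x0: "x \<ge> 0"
  shows "energy_neg vh \<eta> \<mu> lam \<psi>
      + (\<Sum>\<^sub>\<infinity>j. ennreal (lam j) * (\<Sum>\<^sub>\<infinity>m. ennreal ((cmod (\<psi> j m))^2 * (kin m + x * numop m))))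
      + ennreal (vh 0 / (2 * \<eta>)) * num_sq_trace ((\<mu> + x + v_zero vh / (2 * \<eta>)) * \<eta> / vh 0) lam \<psi>
    \<le> energy_pos vh \<eta> \<mu> lam \<psi> + ennreal (vh 0 / (2 * \<eta>) * ((\<mu> + x + v_zero vh / (2 * \<eta>)) * \<eta> / vh 0)^2)"
proof -
  define \<kappa> where "\<kappa> = vh 0 / (2 * \<eta>)"
  define c where "c = (\<mu> + x + v_zero vh / (2 * \<eta>)) * \<eta> / vh 0"
  define P where "P j m = (cmod (\<psi> j m))^2" for j m
  define d where "d m = diag_coef vh \<eta> \<mu> m" for m
  define n where "n m = numop m" for m
  define E where "E m = kin m + x * numop m" for m
  have sf: "\<And>j. 0 \<le> lam j" "\<And>j. lam j \<le> 1" "(\<Sum>\<^sub>\<infinity>j. ennreal (lam j)) = 1"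
    "\<And>j. (\<Sum>\<^sub>\<infinity>m. ennreal (P j m)) = 1"
    using state_facts[OF st] by (simp_all add: P_def)
  have fv: "\<And>j. fock_vec (\<psi> j)" using st by (simp add: is_state_def)
  have k0: "\<kappa> > 0" using eta vh0 by (simp add: \<kappa>_def)
  have P0: "P j m \<ge> 0" for j m by (simp add: P_def)
  have E0: "E m \<ge> 0" if "x \<ge> 0" for m using kin_nonneg[of m] numop_nonneg[of m] that by (simp add: E_def)
  have ident: "P j m * (max (d m) 0 + \<kappa> * (n m)^2) + P j m * (\<kappa> * c^2)
      = P j m * max (- d m) 0 + P j m * E m + \<kappa> * (P j m * (n m - c)^2)" for j m
  proof -
    have "max (d m) 0 + \<kappa> * (n m)^2 + \<kappa> * c^2 = max (- d m) 0 + (kin m + x * n m) + \<kappa> * (n m - c)^2"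
      unfolding \<kappa>_def c_def d_def diag_coef_def n_def by (rule diag_identity[OF eta vh0])
    then have "P j m * (max (d m) 0 + \<kappa> * (n m)^2 + \<kappa> * c^2)
       = P j m * (max (- d m) 0 + (kin m + x * n m) + \<kappa> * (n m - c)^2)" by simp
    then show ?thesis by (simp add: E_def n_def algebra_simps)
  qed
  define low where "low j = (\<Sum>\<^sub>\<infinity>m. ennreal (P j m * (max (d m) 0 + \<kappa> * (n m)^2)))" for j
  have lowj: "low j \<le> (\<Sum>\<^sub>\<infinity>m. ennreal (P j m * max (d m) 0)) + ennreal (1 / (2 * \<eta>)) *
       (\<Sum>\<^sub>\<infinity>p. ennreal (vh p) * (\<Sum>\<^sub>\<infinity>m. ennreal ((cmod (dens_op p (\<psi> j) m))^2)))" for j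
  proof -
    define Y where "Y = (\<Sum>\<^sub>\<infinity>m. ennreal ((n m)^2 * P j m))"
    have Y0: "(\<Sum>\<^sub>\<infinity>m. ennreal ((cmod (dens_op 0 (\<psi> j) m))^2)) = Y"
      by (simp add: Y_def norm_dens0[OF fv] P_def n_def)
    have s0: "ennreal (vh 0) * Y \<le> (\<Sum>\<^sub>\<infinity>p. ennreal (vh p) * (\<Sum>\<^sub>\<infinity>m. ennreal ((cmod (dens_op p (\<psi> j) m))^2)))"
      using single_le_infsum_ennreal[of 0 UNIV "\<lambda>p. ennreal (vh p) * (\<Sum>\<^sub>\<infinity>m. ennreal ((cmod (dens_op p (\<psi> j) m))^2))"]
      by (simp add: Y0)
    have kk: "ennreal (1 / (2 * \<eta>)) * (ennreal (vh 0) * Y) = ennreal \<kappa> * Y"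
    proof -
      have "ennreal (1 / (2 * \<eta>)) * ennreal (vh 0) = ennreal \<kappa>"
        using ennr_prod[of "1 / (2 * \<eta>)" "vh 0"] eta vh0 by (simp add: \<kappa>_def)
      then show ?thesis by (simp add: mult.assoc[symmetric])
    qed
    have pw: "ennreal (P j m * (max (d m) 0 + \<kappa> * (n m)^2)) = ennreal (P j m * max (d m) 0) + ennreal \<kappa> * ennreal ((n m)^2 * P j m)" for m
    proof -
      have a: "0 \<le> P j m * max (d m) 0" "0 \<le> (n m)^2 * P j m" using P0[of j m] by simp_all
      have "ennreal \<kappa> * ennreal ((n m)^2 * P j m) = ennreal (\<kappa> * ((n m)^2 * P j m))"
        by (rule ennr_prod) (use k0 a in auto)
      moreover have "ennreal (P j m * max (d m) 0) + ennreal (\<kappa> * ((n m)^2 * P j m)) = ennreal (P j m * max (d m) 0 + \<kappa> * ((n m)^2 * P j m))"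
        by (rule ennr_sum) (use k0 a in auto)
      ultimately show ?thesis by (simp add: algebra_simps)
    qed
    have "low j = (\<Sum>\<^sub>\<infinity>m. ennreal (P j m * max (d m) 0)) + ennreal \<kappa> * Y"
      by (simp add: low_def pw infsum_add_ennreal infsum_cmult_ennreal Y_def)
    also have "\<dots> \<le> (\<Sum>\<^sub>\<infinity>m. ennreal (P j m * max (d m) 0)) + ennreal (1 / (2 * \<eta>)) *
       (\<Sum>\<^sub>\<infinity>p. ennreal (vh p) * (\<Sum>\<^sub>\<infinity>m. ennreal ((cmod (dens_op p (\<psi> j) m))^2)))"
      unfolding kk[symmetric] by (intro add_left_mono mult_left_mono s0) simp
    finally show ?thesis .
  qed
  have EL: "(\<Sum>\<^sub>\<infinity>j. ennreal (lam j) * low j) \<le> energy_pos vh \<eta> \<mu> lam \<psi>"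
    unfolding energy_pos_def
    by (rule infsum_mono_ennreal, rule mult_left_mono) (use lowj in \<open>simp_all add: P_def d_def\<close>)
  have kc: "ennreal (\<kappa> * c^2) = (\<Sum>\<^sub>\<infinity>j. ennreal (lam j) * (\<Sum>\<^sub>\<infinity>m. ennreal (P j m * (\<kappa> * c^2))))"
  proof -
    have "(\<Sum>\<^sub>\<infinity>m. ennreal (P j m * (\<kappa> * c^2))) = ennreal (\<kappa> * c^2)" for j
    proof -
      have "(\<Sum>\<^sub>\<infinity>m. ennreal (P j m * (\<kappa> * c^2))) = (\<Sum>\<^sub>\<infinity>m. ennreal (P j m) * ennreal (\<kappa> * c^2))"
        by (rule infsum_cong, rule ennr_prod[symmetric]) (use P0 k0 in auto)
      also have "\<dots> = ennreal (\<kappa> * c^2)" by (simp add: infsum_cmult_ennreal' sf(4))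
      finally show ?thesis .
    qed
    then show ?thesis by (simp add: infsum_cmult_ennreal' sf(3))
  qed
  have pw2: "ennreal (P j m * (max (d m) 0 + \<kappa> * (n m)^2)) + ennreal (P j m * (\<kappa> * c^2))
      = ennreal (P j m * max (- d m) 0) + ennreal (P j m * E m) + ennreal \<kappa> * ennreal (P j m * (n m - c)^2)"
    if "x \<ge> 0" for j m
  proof -
    have a: "0 \<le> P j m * (max (d m) 0 + \<kappa> * (n m)^2)" "0 \<le> P j m * (\<kappa> * c^2)"
      "0 \<le> P j m * max (- d m) 0" "0 \<le> P j m * E m" "0 \<le> P j m * (n m - c)^2"
      "0 \<le> \<kappa> * (P j m * (n m - c)^2)"
      using P0[of j m] k0 E0[OF that, of m] by simp_all
    have "ennreal (P j m * (max (d m) 0 + \<kappa> * (n m)^2)) + ennreal (P j m * (\<kappa> * c^2))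
        = ennreal (P j m * max (- d m) 0 + P j m * E m + \<kappa> * (P j m * (n m - c)^2))"
      using ennr_sum[OF a(1) a(2)] ident[of j m] by simp
    also have "\<dots> = ennreal (P j m * max (- d m) 0) + ennreal (P j m * E m) + ennreal (\<kappa> * (P j m * (n m - c)^2))"
      using a by (simp add: add_nonneg_nonneg)
    also have "ennreal (\<kappa> * (P j m * (n m - c)^2)) = ennreal \<kappa> * ennreal (P j m * (n m - c)^2)"
      by (rule ennr_prod[symmetric]) (use a k0 in auto)
    finally show ?thesis .
  qed
  define Nn where "Nn = (\<Sum>\<^sub>\<infinity>j. ennreal (lam j) * (\<Sum>\<^sub>\<infinity>m. ennreal (P j m * max (- d m) 0)))"
  define T where "T = (\<Sum>\<^sub>\<infinity>j. ennreal (lam j) * (\<Sum>\<^sub>\<infinity>m. ennreal (P j m * E m)))"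
  define Q where "Q = (\<Sum>\<^sub>\<infinity>j. ennreal (lam j) * (\<Sum>\<^sub>\<infinity>m. ennreal (P j m * (n m - c)^2)))"
  have "(\<Sum>\<^sub>\<infinity>j. ennreal (lam j) * low j) + ennreal (\<kappa> * c^2)
      = (\<Sum>\<^sub>\<infinity>j. ennreal (lam j) * low j + ennreal (lam j) * (\<Sum>\<^sub>\<infinity>m. ennreal (P j m * (\<kappa> * c^2))))"
    unfolding kc by (simp add: infsum_add_ennreal)
  also have "\<dots> = (\<Sum>\<^sub>\<infinity>j. ennreal (lam j) * (\<Sum>\<^sub>\<infinity>m. ennreal (P j m * (max (d m) 0 + \<kappa> * (n m)^2)) + ennreal (P j m * (\<kappa> * c^2))))"
    by (simp add: low_def infsum_add_ennreal distrib_left)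
  also have "\<dots> = (\<Sum>\<^sub>\<infinity>j. ennreal (lam j) * (\<Sum>\<^sub>\<infinity>m. ennreal (P j m * max (- d m) 0) + ennreal (P j m * E m) + ennreal \<kappa> * ennreal (P j m * (n m - c)^2)))"
    by (simp add: pw2[OF x0])
  also have "\<dots> = Nn + T + ennreal \<kappa> * Q"
    by (simp add: Nn_def T_def Q_def infsum_add_ennreal infsum_cmult_ennreal distrib_left mult.left_commute)
  finally have eq: "(\<Sum>\<^sub>\<infinity>j. ennreal (lam j) * low j) + ennreal (\<kappa> * c^2) = Nn + T + ennreal \<kappa> * Q" .
  have "Nn + T + ennreal \<kappa> * Q \<le> energy_pos vh \<eta> \<mu> lam \<psi> + ennreal (\<kappa> * c^2)"
    unfolding eq[symmetric] by (rule add_right_mono[OF EL])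
  then show ?thesis
    by (simp add: Nn_def T_def Q_def energy_neg_def num_sq_trace_def P_def d_def E_def n_def \<kappa>_def c_def)
qed

lemma ennreal_finite_split:
  fixes a :: ennreal
  assumes "a \<le> b" "b < top"
  obtains r where "a = ennreal r" "r \<ge> 0"
  using assms by (cases a) (auto simp: top_unique)

theorem proposition2p3:
  fixes vh :: "mom \<Rightarrow> real" and c0 :: real
  assumes "\<forall>p. vh p \<ge> 0"
    and "vh summable_on UNIV"
    and "vh 0 > 0"
    and "0 < c0" and "c0 \<le> 1"
  shows "\<exists>C \<eta>0. C > 0 \<and> \<eta>0 > 0 \<and>
    (\<forall>\<eta> \<beta> \<mu> mt lam \<psi>. \<eta> \<ge> \<eta>0 \<longrightarrow>
       c0 * \<eta> powr (-2/3) \<le> \<beta> \<longrightarrow> \<beta> \<le> \<eta> powr (-2/3) / c0 \<longrightarrow>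
       - (\<eta> powr (2/3)) / c0 \<le> \<mu> \<longrightarrow> \<mu> \<le> 1 / c0 \<longrightarrow>
       is_eff_chem_pot vh \<eta> \<mu> \<beta> mt \<longrightarrow>
       is_state lam \<psi> \<longrightarrow>
       grand_pot vh \<eta> \<mu> \<beta> lam \<psi> \<ge>
         ereal (Phi_id_plus \<beta> mt - (\<mu> - mt)^2 * \<eta> / (2 * vh 0))
         + ereal (vh 0 / (2 * \<eta>)) *
             enn2ereal (num_sq_trace ((\<mu> - mt + v_zero vh / (2 * \<eta>)) * \<eta> / vh 0) lam \<psi>)
         - ereal (C * \<eta> powr (2/3) * ln \<eta>))"
proof -
  have vh: "\<And>p. vh p \<ge> 0" using assms(1) by blast
  have vh0: "vh 0 > 0" by (rule assms(3))
  have c0: "c0 > 0" by (rule assms(4))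
  define v0 where "v0 = v_zero vh"
  have v0: "v0 \<ge> 0" unfolding v0_def v_zero_def by (rule infsum_nonneg) (simp add: vh)
  obtain C N where CN: "C > 0" "N \<ge> 1" "\<And>\<eta>. \<eta> \<ge> N \<Longrightarrow> Fb c0 (vh 0) v0 \<eta> \<le> C * \<eta> powr (2/3) * ln \<eta>"
    using Fb_const[OF c0 vh0 v0] by blast
  show ?thesis
  proof (intro exI conjI allI impI)
    show "C > 0" by (rule CN(1))
    show "N > 0" using CN(2) by simp
    fix \<eta> \<beta> \<mu> mt :: real and lam :: "nat \<Rightarrow> real" and \<psi> :: "nat \<Rightarrow> fvec"
    assume eta_ge: "N \<le> \<eta>" and hb: "c0 * \<eta> powr (-2/3) \<le> \<beta>" and hb2: "\<beta> \<le> \<eta> powr (-2/3) / c0"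
      and hmu1: "- (\<eta> powr (2/3)) / c0 \<le> \<mu>" and hmu2: "\<mu> \<le> 1 / c0"
      and chem: "is_eff_chem_pot vh \<eta> \<mu> \<beta> mt" and st: "is_state lam \<psi>"
    have eta: "\<eta> > 0" using eta_ge CN(2) by simp
    have beta: "\<beta> > 0" using hb c0 eta by (smt (verit) mult_pos_pos powr_gt_zero)
    have mt0: "mt < 0" using chem by (simp add: is_eff_chem_pot_def)
    define x where "x = - mt"
    have x: "x > 0" using mt0 by (simp add: x_def)
    have mtx: "mt = - x" by (simp add: x_def)
    define K where "K = C * \<eta> powr (2/3) * ln \<eta>"
    define \<kappa> where "\<kappa> = vh 0 / (2 * \<eta>)"
    define c where "c = (\<mu> + x + v0 / (2 * \<eta>)) * \<eta> / vh 0"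
    define L where "L = (\<Sum>\<^sub>\<infinity>k. - ln (1 - exp (- \<beta> * (psq k + x))))"
    define \<Phi> where "\<Phi> = Phi_id_plus \<beta> mt"
    have S_eq: "(\<Sum>\<^sub>\<infinity>p. 1 / (exp (\<beta> * (psq p + x)) - 1)) = (\<mu> + x) * \<eta> / vh 0"
      using chem by (simp add: is_eff_chem_pot_def mtx)
    note g = chem_g[OF beta x]
    have an: "(\<mu> + x) * v0 / (2 * vh 0) + v0^2 / (8 * \<eta> * vh 0) + (1 / \<beta>) * (- ln (1 - exp (- \<beta> * x)))
       \<le> Fb c0 (vh 0) v0 \<eta>"
      by (rule analytic_bound[OF c0 vh0 v0 eta beta hb hmu1 hmu2 x S_eq g(2) g(3)])
    have anK: "(\<mu> + x) * v0 / (2 * vh 0) + v0^2 / (8 * \<eta> * vh 0) + (1 / \<beta>) * (- ln (1 - exp (- \<beta> * x))) \<le> K"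
      using an CN(3)[OF eta_ge] by (simp add: K_def)
    note rr = chem_r[OF beta x]
    have L_eq: "L = - ln (1 - exp (- \<beta> * x)) - \<beta> * \<Phi>"
      using rr(4) beta by (simp add: L_def \<Phi>_def Phi_id_plus_def mtx)
    have L0: "L \<ge> 0" unfolding L_def by (rule infsum_nonneg) (use rr(1) rr(2) in \<open>simp add: less_imp_le\<close>)
    define EP where "EP = energy_pos vh \<eta> \<mu> lam \<psi>"
    define Nn where "Nn = energy_neg vh \<eta> \<mu> lam \<psi>"
    define Q where "Q = num_sq_trace c lam \<psi>"
    define H where "H = (\<Sum>\<^sub>\<infinity>j. ennreal (- (lam j * ln (lam j))))"
    define T where "T = (\<Sum>\<^sub>\<infinity>j. ennreal (lam j) * (\<Sum>\<^sub>\<infinity>m. ennreal ((cmod (\<psi> j m))^2 * (kin m + x * numop m))))"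
    have gib: "H \<le> ennreal \<beta> * T + ennreal L"
      unfolding H_def T_def L_def by (rule gibbs_sum[OF st beta x rr(3)])
    have en: "Nn + T + ennreal \<kappa> * Q \<le> EP + ennreal (\<kappa> * c^2)"
      unfolding Nn_def T_def Q_def EP_def \<kappa>_def c_def v0_def
      by (rule energy_sum[where vh=vh and \<eta>=\<eta> and \<mu>=\<mu> and x=x and lam=lam and \<psi>=\<psi>, OF st eta vh vh0]) (use x in simp)
    have gib2: "ennreal (1 / \<beta>) * H \<le> T + ennreal (L / \<beta>)"
    proof -
      have "ennreal (1 / \<beta>) * H \<le> ennreal (1 / \<beta>) * (ennreal \<beta> * T + ennreal L)"
        by (rule mult_left_mono[OF gib]) simp
      also have "\<dots> = (ennreal (1 / \<beta>) * ennreal \<beta>) * T + ennreal (1 / \<beta>) * ennreal L"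
        by (simp add: distrib_left mult.assoc)
      also have "ennreal (1 / \<beta>) * ennreal \<beta> = 1" using beta by (simp add: ennr_prod)
      also have "ennreal (1 / \<beta>) * ennreal L = ennreal (L / \<beta>)" using beta L0 by (simp add: ennr_prod)
      finally show ?thesis by simp
    qed
    define A where "A = \<kappa> * c^2 + L / \<beta>"
    have A0: "\<kappa> * c^2 \<ge> 0" "L / \<beta> \<ge> 0" using L0 beta eta vh0 by (simp_all add: \<kappa>_def)
    have main: "Nn + ennreal \<kappa> * Q + ennreal (1 / \<beta>) * H \<le> EP + ennreal A"
    proof -
      have "Nn + ennreal \<kappa> * Q + ennreal (1 / \<beta>) * H \<le> Nn + ennreal \<kappa> * Q + (T + ennreal (L / \<beta>))"
        by (rule add_left_mono[OF gib2])
      also have "\<dots> = (Nn + T + ennreal \<kappa> * Q) + ennreal (L / \<beta>)" by (simp add: ac_simps)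
      also have "\<dots> \<le> (EP + ennreal (\<kappa> * c^2)) + ennreal (L / \<beta>)" by (rule add_right_mono[OF en])
      also have "\<dots> = EP + ennreal A" using A0 by (simp add: A_def ac_simps)
      finally show ?thesis .
    qed
    have AK: "A \<le> K - (\<Phi> - (\<mu> + x)^2 * \<eta> / (2 * vh 0))"
    proof -
      have "\<kappa> * c^2 - (\<mu> + x)^2 * \<eta> / (2 * vh 0) = (\<mu> + x) * v0 / (2 * vh 0) + v0^2 / (8 * \<eta> * vh 0)"
        using eta vh0 by (simp add: \<kappa>_def c_def field_simps power2_eq_square)
      moreover have "L / \<beta> = (1 / \<beta>) * (- ln (1 - exp (- \<beta> * x))) - \<Phi>"
        using beta by (simp add: L_eq field_simps)
      ultimately show ?thesis using anK by (simp add: A_def)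
    qed
    have grand: "grand_pot vh \<eta> \<mu> \<beta> lam \<psi> \<ge>
         ereal (\<Phi> - (\<mu> + x)^2 * \<eta> / (2 * vh 0)) + ereal \<kappa> * enn2ereal Q - ereal K"
    proof (cases "EP = top")
      case True
      then show ?thesis by (simp add: grand_pot_def energy_def EP_def)
    next
      case False
      then obtain p where p: "EP = ennreal p" "p \<ge> 0" by (cases EP) auto
      have fin: "EP + ennreal A < top" using p by simp
      have b1: "Nn \<le> EP + ennreal A" using main by (rule order_trans[rotated]) (simp add: add.assoc)
      have b2: "ennreal \<kappa> * Q \<le> EP + ennreal A"
        using main by (rule order_trans[rotated]) (metis add.commute add.left_commute le_iff_add)
      have b3: "ennreal (1 / \<beta>) * H \<le> EP + ennreal A"
        using main by (rule order_trans[rotated]) (simp add: add.commute)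
      obtain nn where nn: "Nn = ennreal nn" "nn \<ge> 0" using ennreal_finite_split[OF b1 fin] by blast
      obtain kq where kq: "ennreal \<kappa> * Q = ennreal kq" "kq \<ge> 0" using ennreal_finite_split[OF b2 fin] by blast
      obtain bh where bh: "ennreal (1 / \<beta>) * H = ennreal bh" "bh \<ge> 0" using ennreal_finite_split[OF b3 fin] by blast
      have k0: "\<kappa> > 0" using eta vh0 by (simp add: \<kappa>_def)
      have Qfin: "Q \<noteq> top" using kq k0 by (auto simp: ennreal_mult_eq_top_iff)
      then obtain qq where qq: "Q = ennreal qq" "qq \<ge> 0" by (cases Q) auto
      have Hfin: "H \<noteq> top" using bh beta by (auto simp: ennreal_mult_eq_top_iff)
      then obtain hh where hh: "H = ennreal hh" "hh \<ge> 0" by (cases H) auto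
      have real_ineq: "nn + \<kappa> * qq + hh / \<beta> \<le> p + A"
      proof -
        have n1: "0 \<le> \<kappa> * qq" "0 \<le> hh / \<beta>" using qq hh k0 beta by simp_all
        have "ennreal (nn + \<kappa> * qq + hh / \<beta>) = ennreal nn + ennreal (\<kappa> * qq) + ennreal (hh / \<beta>)"
          using n1 nn(2) by (simp add: add_nonneg_nonneg)
        also have "ennreal (\<kappa> * qq) = ennreal \<kappa> * ennreal qq" by (rule ennr_prod[symmetric]) (use k0 qq in auto)
        also have "ennreal (hh / \<beta>) = ennreal (1 / \<beta>) * ennreal hh"
          using ennr_prod[of "1 / \<beta>" hh] beta hh(2) by simp
        finally have "ennreal (nn + \<kappa> * qq + hh / \<beta>) = Nn + ennreal \<kappa> * Q + ennreal (1 / \<beta>) * H"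
          using nn qq hh by simp
        also have "\<dots> \<le> EP + ennreal A" by (rule main)
        also have "\<dots> = ennreal (p + A)" using p A0 by (simp add: A_def)
        finally have fe: "ennreal (nn + \<kappa> * qq + hh / \<beta>) \<le> ennreal (p + A)" .
        have pa: "0 \<le> p + A" using p A0 by (simp add: A_def)
        show ?thesis using ennreal_le_iff[OF pa] fe by blast
      qed
      have energy: "energy vh \<eta> \<mu> lam \<psi> = ereal (p - nn)"
        using False p nn by (simp add: energy_def EP_def[symmetric] Nn_def[symmetric])
      have ent: "ent_term lam = - ereal hh" using hh by (simp add: ent_term_def H_def[symmetric])
      have gp: "grand_pot vh \<eta> \<mu> \<beta> lam \<psi> = ereal (p - nn - hh / \<beta>)"
        using energy ent by (simp add: grand_pot_def)
      have rhs: "ereal (\<Phi> - (\<mu> + x)^2 * \<eta> / (2 * vh 0)) + ereal \<kappa> * enn2ereal Q - ereal K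
          = ereal (\<Phi> - (\<mu> + x)^2 * \<eta> / (2 * vh 0) + \<kappa> * qq - K)"
        using qq by simp
      show ?thesis unfolding gp rhs using real_ineq AK by simp
    qed
    then show "grand_pot vh \<eta> \<mu> \<beta> lam \<psi> \<ge>
         ereal (Phi_id_plus \<beta> mt - (\<mu> - mt)^2 * \<eta> / (2 * vh 0))
         + ereal (vh 0 / (2 * \<eta>)) *
             enn2ereal (num_sq_trace ((\<mu> - mt + v_zero vh / (2 * \<eta>)) * \<eta> / vh 0) lam \<psi>)
         - ereal (C * \<eta> powr (2/3) * ln \<eta>)"
      by (simp add: \<Phi>_def \<kappa>_def Q_def c_def K_def v0_def mtx)
  qed
qed

end
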